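(* Fix $d\ge3$ and let $R,\delta,c_p>1$. Let $\mathsf T\subset S^{d-1}$ be a closed subset with $\max_{\mathsf x,\mathsf y\in\mathsf T}\|\mathsf x-\mathsf y\|_2\le c_p/R$, and let $\mathsf C=\{\mathsf x\in\mathbb R^d: R\le\|\mathsf x\|_2\le R+\delta\sqrt{\log R},\ \mathsf x/\|\mathsf x\|_2\in\mathsf T\}$, with discrete cell $\mathcal C=\mathsf C\cap\mathbb Z^d$. Let $Y$ be simple random walk on $\mathbb Z^d$ started at $\mathbf 0$. Then there exist finite constants $R_1=R_1(d)$ and $C'=C'(d,\delta,c_p)$ such that for all $R>R_1$, $$\mathbb P_{\mathbf 0}\big(Y\text{ hits }\mathcal C\text{ before hitting }\mathbb Z^d\setminus\mathcal B_{R+\delta\sqrt{\log R}}\big)\le C'\,\frac{\log R}{R^{d-1}}.$$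
   Context: $S^{d-1}=\{\mathsf x\in\mathbb R^d:\|\mathsf x\|_2=1\}$. For $\rho>0$, $\mathcal B_\rho=\{x\in\mathbb Z^d:\|x\|_2<\rho\}$ (intersection of the open Euclidean ball with $\mathbb Z^d$). $\mathbb P_{\mathbf 0}$ is the law of simple random walk $Y$ on $\mathbb Z^d$ with $Y_0=\mathbf 0$. *)

theory Defs
  imports "HOL-Analysis.Analysis" "HOL-Probability.Probability"
begin

definition srw_steps :: "(int^'n) set" where
  "srw_steps = {v. \<exists>i. v = axis i 1 \<or> v = axis i (-1)}"

definition srw_space :: "(int^'n) stream measure" where
  "srw_space = stream_space (measure_pmf (pmf_of_set srw_steps))"

definition srw_pos :: "(int^'n) stream \<Rightarrow> nat \<Rightarrow> int^'n" where
  "srw_pos \<omega> n = (\<Sum>k<n. \<omega> !! k)"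

definition lat :: "int^'n \<Rightarrow> real^'n" where
  "lat x = (\<chi> i. of_int (x $ i))"

definition srw_hit_before :: "(int^'n) set \<Rightarrow> (int^'n) set \<Rightarrow> real" where
  "srw_hit_before A B = measure srw_space
     {\<omega> \<in> space srw_space. \<exists>n. srw_pos \<omega> n \<in> A \<and> (\<forall>m<n. srw_pos \<omega> m \<notin> B)}"

end

theory Submission
  imports Defs
begin

lemma srw_steps_eq: "(srw_steps :: (int^'n) set) = range (\<lambda>i. axis i 1) \<union> range (\<lambda>i. axis i (-1))"
  unfolding srw_steps_def by auto

lemma srw_steps_finite[simp]: "finite (srw_steps :: (int^'n::finite) set)"
  unfolding srw_steps_eq by simp

lemma srw_steps_ne[simp]: "(srw_steps :: (int^'n::finite) set) \<noteq> {}"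
  unfolding srw_steps_eq by simp

lemma space_srw[simp]: "space srw_space = UNIV"
  unfolding srw_space_def by (simp add: space_stream_space)

lemma prob_space_srw: "prob_space (srw_space :: (int^'n::finite) stream measure)"
  unfolding srw_space_def by (rule prob_space.prob_space_stream_space) (rule prob_space_measure_pmf)

lemma srw_pos_0[simp]: "srw_pos \<omega> 0 = 0"
  by (simp add: srw_pos_def)

lemma srw_pos_Suc_Stream: "srw_pos (e ## \<omega>) (Suc n) = e + srw_pos \<omega> n"
  unfolding srw_pos_def sum.lessThan_Suc_shift by simp

lemma srw_pos_Suc: "srw_pos \<omega> (Suc n) = srw_pos \<omega> n + \<omega> !! n"
  unfolding srw_pos_def by simp

lemma meas_snth: "(\<lambda>\<omega>. \<omega> !! k) \<in> measurable (srw_space :: (int^'n::finite) stream measure) (count_space UNIV)"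
proof -
  have "(\<lambda>\<omega>. \<omega> !! k) \<in> measurable (srw_space :: (int^'n::finite) stream measure) (measure_pmf (pmf_of_set srw_steps))"
    unfolding srw_space_def by (rule measurable_snth)
  moreover have "(srw_space :: (int^'n::finite) stream measure) \<rightarrow>\<^sub>M (measure_pmf (pmf_of_set srw_steps)) = srw_space \<rightarrow>\<^sub>M count_space UNIV"
    by (rule measurable_cong_sets) auto
  ultimately show ?thesis by simp
qed

lemma meas_pos: "(\<lambda>\<omega>. srw_pos \<omega> n) \<in> measurable (srw_space :: (int^'n::finite) stream measure) (count_space UNIV)"
proof (induction n)
  case 0 then show ?case by simp
next
  case (Suc n)
  have "(\<lambda>\<omega>. (\<lambda>i \<omega>. i + \<omega> !! n) (srw_pos \<omega> n) \<omega>) \<in> measurable (srw_space :: (int^'n::finite) stream measure) (count_space UNIV)"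
  proof (rule measurable_compose_countable[OF _ Suc])
    fix i :: "int^'n"
    show "(\<lambda>\<omega>. i + \<omega> !! n) \<in> measurable srw_space (count_space UNIV)"
      using measurable_compose[OF meas_snth[of n], of "\<lambda>e. i + e" "count_space UNIV"] by simp
  qed
  then show ?case by (simp add: srw_pos_Suc)
qed

lemma meas_pred_pos[measurable]: "Measurable.pred (srw_space :: (int^'n::finite) stream measure) (\<lambda>\<omega>. P (srw_pos \<omega> n))"
  using measurable_compose[OF meas_pos[of n], of P "count_space UNIV"] by simp

lemma meas_pred_pos': "{\<omega> \<in> space (srw_space :: (int^'n::finite) stream measure). P (srw_pos \<omega> n)} \<in> sets srw_space"
proof -
  have "(\<lambda>\<omega>. P (srw_pos \<omega> n)) \<in> measurable (srw_space :: (int^'n::finite) stream measure) (count_space UNIV)"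
    using measurable_compose[OF meas_pos[of n], of P "count_space UNIV"] by simp
  then have "(\<lambda>\<omega>. P (srw_pos \<omega> n)) -` {True} \<inter> space srw_space \<in> sets (srw_space :: (int^'n::finite) stream measure)"
    by (rule measurable_sets) simp
  moreover have "(\<lambda>\<omega>. P (srw_pos \<omega> n)) -` {True} \<inter> space srw_space = {\<omega> \<in> space (srw_space :: (int^'n::finite) stream measure). P (srw_pos \<omega> n)}"
    by auto
  ultimately show ?thesis by simp
qed

definition hitE :: "(int^'n) set \<Rightarrow> (int^'n) set \<Rightarrow> nat \<Rightarrow> int^'n \<Rightarrow> (int^'n) stream set" where
  "hitE A B N x = {\<omega> \<in> space srw_space. \<exists>n\<le>N. x + srw_pos \<omega> n \<in> A \<and> (\<forall>m<n. x + srw_pos \<omega> m \<notin> B)}"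

lemma hitE_sets: "hitE A B N x \<in> sets (srw_space :: (int^'n::finite) stream measure)"
  unfolding hitE_def by measurable

fun hitp :: "(int^'n::finite) set \<Rightarrow> (int^'n) set \<Rightarrow> nat \<Rightarrow> int^'n \<Rightarrow> real" where
  "hitp A B 0 x = (if x \<in> A then 1 else 0)"
| "hitp A B (Suc n) x = (if x \<in> A then 1 else if x \<in> B then 0 else
      (\<Sum>e\<in>srw_steps. hitp A B n (x + e)) / card (srw_steps :: (int^'n) set))"

lemma hitp_nonneg: "0 \<le> hitp A B n x"
  by (induction n arbitrary: x) (auto intro!: sum_nonneg divide_nonneg_nonneg)

lemma hitp_le1: "hitp A B n x \<le> 1"
proof (induction n arbitrary: x)
  case 0 then show ?case by simp
next
  case (Suc n)
  have "(\<Sum>e\<in>srw_steps. hitp A B n (x + e)) \<le> (\<Sum>e\<in>(srw_steps::(int^'a) set). 1)"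
    by (rule sum_mono) (rule Suc)
  moreover have "card (srw_steps :: (int^'a) set) > 0" by (simp add: card_gt_0_iff)
  ultimately show ?case by (simp add: divide_le_eq_1)
qed

lemma hitE_Suc: "x \<notin> A \<Longrightarrow> x \<notin> B \<Longrightarrow>
  hitE A B (Suc N) x = {\<omega> \<in> space srw_space. stl \<omega> \<in> hitE A B N (x + shd \<omega>)}"
proof (intro set_eqI iffI)
  fix \<omega> :: "(int^'a) stream"
  assume xA: "x \<notin> A" and xB: "x \<notin> B"
  have ps: "x + srw_pos \<omega> (Suc j) = (x + shd \<omega>) + srw_pos (stl \<omega>) j" for j
    using srw_pos_Suc_Stream[of "shd \<omega>" "stl \<omega>" j] by (simp add: add.assoc)
  {
    assume "\<omega> \<in> hitE A B (Suc N) x"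
    then obtain n where n: "n \<le> Suc N" "x + srw_pos \<omega> n \<in> A" "\<forall>m<n. x + srw_pos \<omega> m \<notin> B"
      unfolding hitE_def by blast
    then obtain k where k: "n = Suc k" using xA by (cases n) auto
    have "k \<le> N" using n k by simp
    moreover have "(x + shd \<omega>) + srw_pos (stl \<omega>) k \<in> A" using n(2) k ps[of k] by simp
    moreover have "\<forall>m<k. (x + shd \<omega>) + srw_pos (stl \<omega>) m \<notin> B"
    proof (intro allI impI)
      fix m assume "m < k"
      then have "Suc m < n" using k by simp
      then show "(x + shd \<omega>) + srw_pos (stl \<omega>) m \<notin> B" using n(3) ps[of m] by metis
    qed
    ultimately show "\<omega> \<in> {\<omega> \<in> space srw_space. stl \<omega> \<in> hitE A B N (x + shd \<omega>)}"
      unfolding hitE_def by auto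
  next
    assume "\<omega> \<in> {\<omega> \<in> space srw_space. stl \<omega> \<in> hitE A B N (x + shd \<omega>)}"
    then obtain n where n: "n \<le> N" "(x + shd \<omega>) + srw_pos (stl \<omega>) n \<in> A"
       "\<forall>m<n. (x + shd \<omega>) + srw_pos (stl \<omega>) m \<notin> B"
      unfolding hitE_def by blast
    have "\<forall>m<Suc n. x + srw_pos \<omega> m \<notin> B"
    proof (intro allI impI)
      fix m assume m: "m < Suc n"
      show "x + srw_pos \<omega> m \<notin> B"
      proof (cases m)
        case 0 then show ?thesis using xB by simp
      next
        case (Suc m')
        from m Suc have "m' < n" by simp
        then have "(x + shd \<omega>) + srw_pos (stl \<omega>) m' \<notin> B" using n(3) by blast
        then show ?thesis using ps[of m'] Suc by metis
      qed
    qed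
    moreover have "x + srw_pos \<omega> (Suc n) \<in> A" using n(2) by (simp only: ps)
    ultimately show "\<omega> \<in> hitE A B (Suc N) x" using n(1) unfolding hitE_def
      by (intro CollectI conjI exI[of _ "Suc n"]) auto
  }
qed

lemma measure_hitE: "measure (srw_space :: (int^'n::finite) stream measure) (hitE A B N x) = hitp A B N x"
proof (induction N arbitrary: x)
  case 0
  show ?case
    by (cases "x \<in> A") (auto simp: hitE_def prob_space.prob_space[OF prob_space_srw, simplified])
next
  case (Suc N)
  interpret S: prob_space "srw_space :: (int^'n::finite) stream measure" by (rule prob_space_srw)
  interpret M: prob_space "measure_pmf (pmf_of_set (srw_steps :: (int^'n) set))" by (rule prob_space_measure_pmf)
  show ?case
  proof (cases "x \<in> A")
    case True
    then have "hitE A B (Suc N) x = space srw_space" unfolding hitE_def by (auto intro!: exI[of _ 0])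
    with True show ?thesis using S.prob_space by simp
  next
    case nA: False
    show ?thesis
    proof (cases "x \<in> B")
      case True
      have "\<omega> \<notin> hitE A B (Suc N) x" for \<omega>
      proof
        assume "\<omega> \<in> hitE A B (Suc N) x"
        then obtain n where n: "x + srw_pos \<omega> n \<in> A" "\<forall>m<n. x + srw_pos \<omega> m \<notin> B"
          unfolding hitE_def by blast
        show False
        proof (cases n)
          case 0 then show False using n nA by simp
        next
          case (Suc k) then show False using n(2)[rule_format, of 0] True by simp
        qed
      qed
      then have "hitE A B (Suc N) x = {}" by blast
      with True nA show ?thesis by simp
    next
      case nB: False
      have "emeasure srw_space (hitE A B (Suc N) x) =
        (\<integral>\<^sup>+t. emeasure srw_space {\<omega>\<in>space srw_space. t ## \<omega> \<in> hitE A B (Suc N) x} \<partial>(measure_pmf (pmf_of_set (srw_steps :: (int^'n) set))))"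
        unfolding srw_space_def by (rule prob_space.emeasure_stream_space[OF prob_space_measure_pmf]) (rule hitE_sets[unfolded srw_space_def])
      also have "\<dots> = (\<integral>\<^sup>+t. ennreal (hitp A B N (x + t)) \<partial>(measure_pmf (pmf_of_set (srw_steps :: (int^'n) set))))"
      proof (rule nn_integral_cong)
        fix t :: "int^'n"
        have "{\<omega>\<in>space srw_space. t ## \<omega> \<in> hitE A B (Suc N) x} = hitE A B N (x + t)"
          using hitE_Suc[OF nA nB] by (auto simp: hitE_def)
        then show "emeasure srw_space {\<omega>\<in>space srw_space. t ## \<omega> \<in> hitE A B (Suc N) x} = ennreal (hitp A B N (x + t))"
          using Suc.IH[of "x+t"] by (simp add: S.emeasure_eq_measure)
      qed
      also have "\<dots> = (\<Sum>t\<in>srw_steps. ennreal (hitp A B N (x + t))) / card (srw_steps :: (int^'n) set)"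
        by (rule nn_integral_pmf_of_set) auto
      also have "\<dots> = ennreal (hitp A B (Suc N) x)"
      proof -
        have nn: "\<And>t. 0 \<le> hitp A B N t"
          by (rule hitp_nonneg)
        have "(\<Sum>t\<in>srw_steps. ennreal (hitp A B N (x + t))) = ennreal (\<Sum>t\<in>srw_steps. hitp A B N (x + t))"
          using nn by (simp add: sum_ennreal)
        moreover have "card (srw_steps :: (int^'n) set) > 0" by (simp add: card_gt_0_iff)
        ultimately show ?thesis using nA nB nn
          by (simp add: divide_ennreal sum_nonneg ennreal_of_nat_eq_real_of_nat)
      qed
      finally have "ennreal (measure srw_space (hitE A B (Suc N) x)) = ennreal (hitp A B (Suc N) x)"
        by (simp add: S.emeasure_eq_measure)
      then show ?thesis using hitp_nonneg[of A B "Suc N" x] measure_nonneg[of srw_space "hitE A B (Suc N) x"]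
        by (subst (asm) ennreal_inj) auto
    qed
  qed
qed

lemma hitp_compare:
  fixes h :: "int^'n::finite \<Rightarrow> real"
  assumes h0: "\<And>x. 0 \<le> h x"
    and AS: "A \<subseteq> S"
    and sup: "\<And>x. x \<notin> S \<Longrightarrow> x \<notin> B \<Longrightarrow> (\<Sum>e\<in>srw_steps. h (x+e)) \<le> card (srw_steps::(int^'n) set) * h x"
    and bd: "\<And>x e n. x \<notin> S \<Longrightarrow> x \<notin> B \<Longrightarrow> e \<in> srw_steps \<Longrightarrow> x + e \<in> S \<Longrightarrow> hitp A B n (x+e) \<le> h (x+e)"
  shows "x \<notin> S \<Longrightarrow> hitp A B n x \<le> h x"
proof (induction n arbitrary: x)
  case 0
  then show ?case using AS h0[of x] by auto
next
  case (Suc n)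
  have xA: "x \<notin> A" using Suc.prems AS by auto
  show ?case
  proof (cases "x \<in> B")
    case True then show ?thesis using xA h0[of x] by simp
  next
    case False
    have "(\<Sum>e\<in>srw_steps. hitp A B n (x + e)) \<le> (\<Sum>e\<in>srw_steps. h (x + e))"
    proof (rule sum_mono)
      fix e :: "int^'n" assume e: "e \<in> srw_steps"
      show "hitp A B n (x + e) \<le> h (x + e)"
      proof (cases "x + e \<in> S")
        case True then show ?thesis using bd[OF Suc.prems False e] by simp
      next
        case False then show ?thesis using Suc.IH by simp
      qed
    qed
    also have "\<dots> \<le> card (srw_steps::(int^'n) set) * h x" using sup[OF Suc.prems False] .
    finally have *: "(\<Sum>e\<in>srw_steps. hitp A B n (x + e)) \<le> card (srw_steps::(int^'n) set) * h x" .
    have "card (srw_steps :: (int^'n) set) > 0" by (simp add: card_gt_0_iff)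
    then show ?thesis using xA False * by (simp add: divide_le_eq mult.commute)
  qed
qed

lemma hitp_union:
  fixes A :: "(int^'n::finite) set"
  assumes fin: "finite A"
  shows "hitp A B n x \<le> (\<Sum>z\<in>A. hitp {z} B n x)"
proof (induction n arbitrary: x)
  case 0
  show ?case
  proof (cases "x \<in> A")
    case True
    have "(\<Sum>z\<in>A. hitp {z} B 0 x) = hitp {x} B 0 x + (\<Sum>z\<in>A-{x}. hitp {z} B 0 x)"
      using fin True by (simp add: sum.remove)
    moreover have "(\<Sum>z\<in>A-{x}. hitp {z} B 0 x) \<ge> 0" by (intro sum_nonneg hitp_nonneg)
    ultimately show ?thesis using True by simp
  next
    case False then show ?thesis by (simp add: sum_nonneg)
  qed
next
  case (Suc n)
  show ?case
  proof (cases "x \<in> A")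
    case True
    have "(\<Sum>z\<in>A. hitp {z} B (Suc n) x) = hitp {x} B (Suc n) x + (\<Sum>z\<in>A-{x}. hitp {z} B (Suc n) x)"
      using fin True by (simp add: sum.remove)
    moreover have "(\<Sum>z\<in>A-{x}. hitp {z} B (Suc n) x) \<ge> 0" by (intro sum_nonneg hitp_nonneg)
    ultimately show ?thesis using True by simp
  next
    case nA: False
    show ?thesis
    proof (cases "x \<in> B")
      case True then show ?thesis using nA by (simp add: sum_nonneg hitp_nonneg)
    next
      case nB: False
      have eq: "hitp {z} B (Suc n) x = (\<Sum>e\<in>srw_steps. hitp {z} B n (x + e)) / card (srw_steps :: (int^'n) set)"
        if "z \<in> A" for z using that nA nB by auto
      have "(\<Sum>e\<in>srw_steps. hitp A B n (x + e)) \<le> (\<Sum>e\<in>srw_steps. \<Sum>z\<in>A. hitp {z} B n (x + e))"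
        by (rule sum_mono) (rule Suc.IH)
      also have "\<dots> = (\<Sum>z\<in>A. \<Sum>e\<in>srw_steps. hitp {z} B n (x + e))" by (rule sum.swap)
      finally have "(\<Sum>e\<in>srw_steps. hitp A B n (x + e)) / card (srw_steps :: (int^'n) set)
          \<le> (\<Sum>z\<in>A. \<Sum>e\<in>srw_steps. hitp {z} B n (x + e)) / card (srw_steps :: (int^'n) set)"
        by (rule divide_right_mono) simp
      also have "\<dots> = (\<Sum>z\<in>A. (\<Sum>e\<in>srw_steps. hitp {z} B n (x + e)) / card (srw_steps :: (int^'n) set))"
        by (rule sum_divide_distrib)
      also have "\<dots> = (\<Sum>z\<in>A. hitp {z} B (Suc n) x)"
        by (rule sum.cong[OF refl], rule eq[symmetric], assumption)
      finally show ?thesis using nA nB by simp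
    qed
  qed
qed

lemma srw_hit_before_le:
  assumes "\<And>N. hitp A B N 0 \<le> c"
  shows "srw_hit_before A (B :: (int^'n::finite) set) \<le> c"
proof -
  interpret S: prob_space "srw_space :: (int^'n::finite) stream measure" by (rule prob_space_srw)
  have eq: "{\<omega> \<in> space srw_space. \<exists>n. srw_pos \<omega> n \<in> A \<and> (\<forall>m<n. srw_pos \<omega> m \<notin> B)} = (\<Union>N. hitE A B N 0)"
    unfolding hitE_def by auto
  have "(\<lambda>N. measure srw_space (hitE A B N 0)) \<longlonglongrightarrow> measure srw_space (\<Union>N. hitE A B N (0::int^'n))"
  proof (rule S.finite_Lim_measure_incseq)
    show "range (\<lambda>i. hitE A B i 0) \<subseteq> S.events" using hitE_sets by auto
    show "incseq (\<lambda>i. hitE A B i (0::int^'n))"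
      unfolding incseq_def hitE_def using le_trans by blast
  qed
  then have "measure srw_space (\<Union>N. hitE A B N (0::int^'n)) \<le> c"
    by (rule LIMSEQ_le_const2) (simp add: measure_hitE assms)
  then show ?thesis unfolding srw_hit_before_def eq .
qed

definition tdiff :: "real \<Rightarrow> nat \<Rightarrow> real \<Rightarrow> real" where
  "tdiff k m t = (\<Prod>j<m. (- k - real j)) * (1 + t) powr (- k - real m)"

lemma tdiff_deriv: "t > -1 \<Longrightarrow> DERIV (tdiff k m) t :> tdiff k (Suc m) t"
proof -
  assume t: "t > -1"
  have "DERIV (\<lambda>t. (1 + t) powr (- k - real m)) t :> (- k - real m) * (1 + t) powr (- k - real m - of_nat 1) * 1"
    by (rule DERIV_fun_powr) (use t in \<open>auto intro!: derivative_eq_intros\<close>)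
  then have "DERIV (\<lambda>t. (\<Prod>j<m. (- k - real j)) * (1 + t) powr (- k - real m)) t :>
      (\<Prod>j<m. (- k - real j)) * ((- k - real m) * (1 + t) powr (- k - real m - of_nat 1) * 1)"
    by (rule DERIV_cmult)
  then show ?thesis unfolding tdiff_def
    by (rule DERIV_cong) (simp add: algebra_simps)
qed

lemma taylor_gen:
  fixes k q :: real
  assumes "n > 0" "\<bar>q\<bar> \<le> 1/2"
  shows "\<exists>t. \<bar>t\<bar> \<le> 1/2 \<and> (1 + q) powr (-k) = (\<Sum>m<n. tdiff k m 0 / fact m * q ^ m) + tdiff k n t / fact n * q ^ n"
proof (cases "q = 0")
  case True
  obtain n' where n': "n = Suc n'" using assms(1) gr0_conv_Suc by auto
  have "(\<Sum>m<n. tdiff k m 0 / fact m * q ^ m) = (\<Sum>m<Suc n'. tdiff k m 0 / fact m * q ^ m)" using n' by simp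
  also have "\<dots> = tdiff k 0 0 / fact 0 * q ^ 0 + (\<Sum>m<n'. tdiff k (Suc m) 0 / fact (Suc m) * q ^ (Suc m))"
    by (rule sum.lessThan_Suc_shift)
  also have "\<dots> = 1" using True by (simp add: tdiff_def)
  finally show ?thesis using True n' by (intro exI[of _ 0]) simp
next
  case False
  have "\<exists>t. (if q < 0 then q < t \<and> t < 0 else 0 < t \<and> t < q) \<and>
    tdiff k 0 q = (\<Sum>m<n. (tdiff k m 0 / fact m) * (q - 0)^m) + (tdiff k n t / fact n) * (q - 0)^n"
    by (rule Taylor[where n=n and diff="tdiff k" and f="tdiff k 0" and a="-1/2" and b="1/2" and c=0 and x=q]) (use assms False in \<open>auto intro!: tdiff_deriv\<close>)
  then obtain t where t: "(if q < 0 then q < t \<and> t < 0 else 0 < t \<and> t < q)"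
    "tdiff k 0 q = (\<Sum>m<n. (tdiff k m 0 / fact m) * (q - 0)^m) + (tdiff k n t / fact n) * (q - 0)^n" by blast
  have "\<bar>t\<bar> \<le> 1/2" using t(1) assms(2) by (auto split: if_splits)
  moreover have "tdiff k 0 q = (1 + q) powr (-k)" by (simp add: tdiff_def)
  ultimately show ?thesis using t(2) by auto
qed

lemma tdiff_4_bound:
  fixes k q t :: real
  assumes "k > 0" "\<bar>t\<bar> \<le> 1/2"
  shows "\<bar>tdiff k 4 t\<bar> \<le> k*(k+1)*(k+2)*(k+3) * 2 powr (k+4)"
proof -
  have p: "(\<Prod>j<4. (- k - real j)) = k*(k+1)*(k+2)*(k+3)"
    by (simp add: eval_nat_numeral algebra_simps)
  have "(1 + t) powr (- k - 4) \<le> (1/2) powr (- k - 4)"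
    by (rule powr_mono2') (use assms in auto)
  also have "(1/2::real) powr (- k - 4) = 2 powr (k + 4)"
  proof -
    have "(1/2::real) powr (- k - 4) = (1/2) powr (-(k+4))" by simp
    also have "\<dots> = inverse ((1/2) powr (k+4))" by (rule powr_minus)
    also have "(1/2::real) powr (k+4) = 1 / 2 powr (k+4)" by (simp add: powr_divide)
    finally show ?thesis by simp
  qed
  finally have "(1 + t) powr (- k - 4) \<le> 2 powr (k + 4)" .
  moreover have "k*(k+1)*(k+2)*(k+3) \<ge> 0" using assms by simp
  moreover have "\<bar>tdiff k 4 t\<bar> = k*(k+1)*(k+2)*(k+3) * (1 + t) powr (- k - 4)"
    unfolding tdiff_def p using assms by (subst abs_of_nonneg) (auto intro!: mult_nonneg_nonneg)
  ultimately show ?thesis by (simp add: mult_left_mono)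
qed

definition tM :: "real \<Rightarrow> real" where
  "tM k = k*(k+1)*(k+2)*(k+3) / 24 * 2 powr (k+4)"

lemma tM_nonneg: "k > 0 \<Longrightarrow> tM k \<ge> 0"
  unfolding tM_def by simp

lemma taylor4:
  fixes k q t :: real
  assumes "k > 0" "\<bar>q\<bar> \<le> 1/2"
  shows "\<bar>(1+q) powr (-k) - (1 - k*q + k*(k+1)/2*q^2 - k*(k+1)*(k+2)/6*q^3)\<bar> \<le> tM k * q^4"
proof -
  obtain t where t: "\<bar>t\<bar> \<le> 1/2" "(1 + q) powr (-k) = (\<Sum>m<4. tdiff k m 0 / fact m * q ^ m) + tdiff k 4 t / fact 4 * q ^ 4"
    using taylor_gen[of 4 q k] assms by auto
  have s: "(\<Sum>m<4. tdiff k m 0 / fact m * q ^ m) = 1 - k*q + k*(k+1)/2*q^2 - k*(k+1)*(k+2)/6*q^3"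
    by (simp add: eval_nat_numeral tdiff_def fact_numeral algebra_simps divide_simps)
  have "\<bar>tdiff k 4 t / fact 4 * q ^ 4\<bar> = \<bar>tdiff k 4 t\<bar> / 24 * q^4"
    by (simp add: abs_mult fact_numeral)
  also have "\<dots> \<le> (k*(k+1)*(k+2)*(k+3) * 2 powr (k+4)) / 24 * q^4"
    using tdiff_4_bound[OF assms(1) t(1)] by (intro mult_right_mono divide_right_mono) auto
  finally show ?thesis using t(2) s unfolding tM_def by simp
qed

lemma taylor2_lower:
  fixes k q t :: real
  assumes "k > 0" "\<bar>q\<bar> \<le> 1/2"
  shows "(1+q) powr (-k) \<ge> 1 - k*q"
proof -
  obtain t where t: "\<bar>t\<bar> \<le> 1/2" "(1 + q) powr (-k) = (\<Sum>m<2. tdiff k m 0 / fact m * q ^ m) + tdiff k 2 t / fact 2 * q ^ 2"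
    using taylor_gen[of 2 q k] assms by auto
  have s: "(\<Sum>m<2. tdiff k m 0 / fact m * q ^ m) = 1 - k*q"
    by (simp add: eval_nat_numeral tdiff_def)
  have "(\<Prod>j<2. (- k - real j)) = k * (k+1)" by (simp add: eval_nat_numeral algebra_simps)
  then have "tdiff k 2 t = k * (k+1) * (1 + t) powr (- k - 2)" by (simp add: tdiff_def)
  moreover have "k * (k+1) \<ge> 0" using assms by simp
  ultimately have "tdiff k 2 t \<ge> 0" by simp
  then have "tdiff k 2 t / fact 2 * q ^ 2 \<ge> 0" by simp
  then show ?thesis using t(2) s by simp
qed

lemma norm2_sum: "(norm (y::real^'n))^2 = (\<Sum>i\<in>UNIV. (y$i)^2)"
  by (simp only: power2_norm_eq_inner) (simp add: inner_vec_def power2_eq_square)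

lemma inner_sum: "inner (x::real^'n) y = (\<Sum>i\<in>UNIV. x$i * y$i)"
  by (simp add: inner_vec_def)

lemma norm2_plus_axis: "(norm ((y::real^'n) + axis i 1))^2 = (norm y)^2 + 2 * y$i + 1"
  by (simp add: power2_norm_eq_inner inner_add_left inner_add_right inner_axis inner_axis' inner_commute)

lemma norm2_minus_axis: "(norm ((y::real^'n) - axis i 1))^2 = (norm y)^2 - 2 * y$i + 1"
  by (simp add: power2_norm_eq_inner inner_diff_left inner_diff_right inner_axis inner_axis' inner_commute)

lemma powr_split:
  fixes \<sigma> h k :: real
  assumes "\<sigma> > 0" "\<bar>h\<bar> \<le> \<sigma>/2"
  shows "(\<sigma> + h) powr (-k) = \<sigma> powr (-k) * (1 + h/\<sigma>) powr (-k)"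
proof -
  have "1 + h/\<sigma> > 0" using assms by (auto simp: abs_le_iff field_simps)
  have "\<sigma> + h = \<sigma> * (1 + h/\<sigma>)" using assms by (simp add: field_simps)
  then show ?thesis using assms \<open>1 + h/\<sigma> > 0\<close> by (simp add: powr_mult)
qed

lemma scalar_even:
  fixes \<sigma> h k :: real
  assumes "k > 0" "\<sigma> > 0" "\<bar>h\<bar> \<le> \<sigma>/2"
  shows "\<bar>(\<sigma>+h) powr (-k) + (\<sigma>-h) powr (-k) - \<sigma> powr (-k) * (2 + k*(k+1)*(h/\<sigma>)^2)\<bar> \<le> \<sigma> powr (-k) * (2 * tM k * (h/\<sigma>)^4)"
proof -
  define q where "q = h/\<sigma>"
  have q: "\<bar>q\<bar> \<le> 1/2" "\<bar>-q\<bar> \<le> 1/2" using assms by (auto simp: q_def abs_divide field_simps)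
  have e1: "(\<sigma>+h) powr (-k) = \<sigma> powr (-k) * (1 + q) powr (-k)" unfolding q_def by (rule powr_split) (use assms in auto)
  have e2: "(\<sigma>-h) powr (-k) = \<sigma> powr (-k) * (1 + (-q)) powr (-k)" unfolding q_def
    using powr_split[of \<sigma> "-h" k] assms by simp
  note t1 = taylor4[OF assms(1) q(1)]
  note t2 = taylor4[OF assms(1) q(2)]
  have "\<bar>(1 + q) powr (-k) + (1 + (-q)) powr (-k) - (2 + k*(k+1)*q^2)\<bar> \<le> 2 * tM k * q^4"
    using t1 t2 by (simp add: abs_le_iff power2_eq_square power4_eq_xxxx)
  then have "\<sigma> powr (-k) * \<bar>(1 + q) powr (-k) + (1 + (-q)) powr (-k) - (2 + k*(k+1)*q^2)\<bar> \<le> \<sigma> powr (-k) * (2 * tM k * q^4)"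
    by (intro mult_left_mono) auto
  moreover have "(\<sigma>+h) powr (-k) + (\<sigma>-h) powr (-k) - \<sigma> powr (-k) * (2 + k*(k+1)*q^2)
     = \<sigma> powr (-k) * ((1 + q) powr (-k) + (1 + (-q)) powr (-k) - (2 + k*(k+1)*q^2))"
    unfolding e1 e2 by (simp only: algebra_simps)
  ultimately show ?thesis unfolding q_def[symmetric] by (simp add: abs_mult)
qed

lemma scalar_odd:
  fixes \<sigma> h k :: real
  assumes "k > 0" "\<sigma> > 0" "\<bar>h\<bar> \<le> \<sigma>/2"
  shows "\<bar>(\<sigma>+h) powr (-k) - (\<sigma>-h) powr (-k) - \<sigma> powr (-k) * (- 2*k*(h/\<sigma>) - k*(k+1)*(k+2)/3*(h/\<sigma>)^3)\<bar> \<le> \<sigma> powr (-k) * (2 * tM k * (h/\<sigma>)^4)"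
proof -
  define q where "q = h/\<sigma>"
  have q: "\<bar>q\<bar> \<le> 1/2" "\<bar>-q\<bar> \<le> 1/2" using assms by (auto simp: q_def abs_divide field_simps)
  have e1: "(\<sigma>+h) powr (-k) = \<sigma> powr (-k) * (1 + q) powr (-k)" unfolding q_def by (rule powr_split) (use assms in auto)
  have e2: "(\<sigma>-h) powr (-k) = \<sigma> powr (-k) * (1 + (-q)) powr (-k)" unfolding q_def
    using powr_split[of \<sigma> "-h" k] assms by simp
  note t1 = taylor4[OF assms(1) q(1)]
  note t2 = taylor4[OF assms(1) q(2)]
  have "\<bar>(1 + q) powr (-k) - (1 + (-q)) powr (-k) - (- 2*k*q - k*(k+1)*(k+2)/3*q^3)\<bar> \<le> 2 * tM k * q^4"
    using t1 t2 by (simp add: abs_le_iff power2_eq_square power3_eq_cube power4_eq_xxxx)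
  then have "\<sigma> powr (-k) * \<bar>(1 + q) powr (-k) - (1 + (-q)) powr (-k) - (- 2*k*q - k*(k+1)*(k+2)/3*q^3)\<bar> \<le> \<sigma> powr (-k) * (2 * tM k * q^4)"
    by (intro mult_left_mono) auto
  moreover have "(\<sigma>+h) powr (-k) - (\<sigma>-h) powr (-k) - \<sigma> powr (-k) * (- 2*k*q - k*(k+1)*(k+2)/3*q^3)
     = \<sigma> powr (-k) * ((1 + q) powr (-k) - (1 + (-q)) powr (-k) - (- 2*k*q - k*(k+1)*(k+2)/3*q^3))"
    unfolding e1 e2 by (simp only: algebra_simps)
  ultimately show ?thesis unfolding q_def[symmetric] by (simp add: abs_mult)
qed

lemma coord_small:
  fixes y :: "real^'n"
  assumes "b \<ge> 3"
  shows "\<bar>2 * y$i\<bar> \<le> ((norm y)^2 + 1 + b) / 2"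
proof -
  have "\<bar>y$i\<bar> \<le> norm y" by (rule component_le_norm_cart)
  moreover have "4 * norm y \<le> (norm y)^2 + 4" using sum_squares_ge_zero[of "norm y - 2" 0]
    by (simp add: power2_eq_square algebra_simps)
  ultimately show ?thesis using assms by (simp add: abs_mult)
qed

lemma sq_le_sum:
  fixes y :: "real^'n"
  shows "(y$i)^2 \<le> (norm y)^2"
  using power_mono[OF component_le_norm_cart[of y i], of 2] by simp

lemma sum_even:
  fixes y :: "real^'n" and k b :: real
  assumes k: "k > 0" and b: "b \<ge> 3"
  defines "\<sigma> \<equiv> (norm y)^2 + 1 + b"
  shows "\<bar>(\<Sum>i\<in>UNIV. (\<sigma> + 2*y$i) powr (-k) + (\<sigma> - 2*y$i) powr (-k))
      - \<sigma> powr (-k) * (2 * CARD('n) + k*(k+1)*4*(norm y)^2/\<sigma>^2)\<bar>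
      \<le> \<sigma> powr (-k) * (2 * tM k * 16 * (norm y)^4 / \<sigma>^4)"
proof -
  have sp: "\<sigma> > 0" unfolding \<sigma>_def using b by (simp add: add_nonneg_pos)
  define q where "q i = 2 * y$i / \<sigma>" for i
  have per: "\<bar>(\<sigma> + 2*y$i) powr (-k) + (\<sigma> - 2*y$i) powr (-k) - \<sigma> powr (-k) * (2 + k*(k+1)*(q i)^2)\<bar>
      \<le> \<sigma> powr (-k) * (2 * tM k * (q i)^4)" for i
    unfolding q_def by (rule scalar_even[OF k sp]) (use coord_small[OF b, of y i] in \<open>simp add: \<sigma>_def\<close>)
  have sq: "(\<Sum>i\<in>UNIV. (q i)^2) = 4 * (norm y)^2 / \<sigma>^2"
    unfolding q_def norm2_sum by (simp add: power_divide power_mult_distrib sum_divide_distrib sum_distrib_left)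
  have qi: "(q i)^2 \<le> 4 * (norm y)^2 / \<sigma>^2" for i
    unfolding q_def using sq_le_sum[of y i] sp by (simp add: power_divide power_mult_distrib divide_right_mono)
  have q4: "(\<Sum>i\<in>UNIV. (q i)^4) \<le> 16 * (norm y)^4 / \<sigma>^4"
  proof -
    have "(\<Sum>i\<in>UNIV. (q i)^4) \<le> (\<Sum>i\<in>UNIV. (4 * (norm y)^2 / \<sigma>^2) * (q i)^2)"
    proof (rule sum_mono)
      fix i show "(q i)^4 \<le> (4 * (norm y)^2 / \<sigma>^2) * (q i)^2"
        using mult_right_mono[OF qi[of i], of "(q i)^2"] by (simp add: power4_eq_xxxx power2_eq_square)
    qed
    also have "\<dots> = (4 * (norm y)^2 / \<sigma>^2) * (\<Sum>i\<in>UNIV. (q i)^2)"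
      by (rule sum_distrib_left[symmetric])
    also have "\<dots> = 16 * (norm y)^4 / \<sigma>^4"
      unfolding sq by (simp add: power4_eq_xxxx power2_eq_square)
    finally show ?thesis .
  qed
  have "\<bar>(\<Sum>i\<in>UNIV. (\<sigma> + 2*y$i) powr (-k) + (\<sigma> - 2*y$i) powr (-k)) - (\<Sum>i\<in>UNIV. \<sigma> powr (-k) * (2 + k*(k+1)*(q i)^2))\<bar>
      = \<bar>\<Sum>i\<in>UNIV. ((\<sigma> + 2*y$i) powr (-k) + (\<sigma> - 2*y$i) powr (-k) - \<sigma> powr (-k) * (2 + k*(k+1)*(q i)^2))\<bar>"
    by (simp add: sum_subtractf)
  also have "\<dots> \<le> (\<Sum>i\<in>UNIV. \<bar>(\<sigma> + 2*y$i) powr (-k) + (\<sigma> - 2*y$i) powr (-k) - \<sigma> powr (-k) * (2 + k*(k+1)*(q i)^2)\<bar>)"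
    by (rule sum_abs)
  also have "\<dots> \<le> (\<Sum>i\<in>UNIV. \<sigma> powr (-k) * (2 * tM k * (q i)^4))"
    by (rule sum_mono) (rule per)
  also have "\<dots> = \<sigma> powr (-k) * (2 * tM k) * (\<Sum>i\<in>UNIV. (q i)^4)"
    by (simp add: sum_distrib_left mult.assoc)
  also have "\<dots> \<le> \<sigma> powr (-k) * (2 * tM k) * (16 * (norm y)^4 / \<sigma>^4)"
    by (rule mult_left_mono[OF q4]) (use tM_nonneg[OF k] in simp)
  finally have A: "\<bar>(\<Sum>i\<in>UNIV. (\<sigma> + 2*y$i) powr (-k) + (\<sigma> - 2*y$i) powr (-k)) - (\<Sum>i\<in>UNIV. \<sigma> powr (-k) * (2 + k*(k+1)*(q i)^2))\<bar>
     \<le> \<sigma> powr (-k) * (2 * tM k) * (16 * (norm y)^4 / \<sigma>^4)" .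
  have "(\<Sum>i\<in>UNIV. \<sigma> powr (-k) * (2 + k*(k+1)*(q i)^2)) = \<sigma> powr (-k) * (2 * CARD('n) + k*(k+1)*(\<Sum>i\<in>UNIV. (q i)^2))"
    by (simp add: sum.distrib sum_distrib_left[symmetric] algebra_simps)
  also have "\<dots> = \<sigma> powr (-k) * (2 * CARD('n) + k*(k+1)*4*(norm y)^2/\<sigma>^2)"
    by (simp add: sq)
  finally have E: "(\<Sum>i\<in>UNIV. \<sigma> powr (-k) * (2 + k*(k+1)*(q i)^2)) = \<sigma> powr (-k) * (2 * CARD('n) + k*(k+1)*4*(norm y)^2/\<sigma>^2)" .
  have eqR: "\<sigma> powr (-k) * (2 * tM k) * (16 * (norm y)^4 / \<sigma>^4) = \<sigma> powr (-k) * (2 * tM k * 16 * (norm y)^4 / \<sigma>^4)"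
    by simp
  show ?thesis using A unfolding E eqR .
qed

lemma sum_odd:
  fixes x y :: "real^'n" and k b :: real
  assumes k: "k > 0" and b: "b \<ge> 3"
  defines "\<sigma> \<equiv> (norm y)^2 + 1 + b"
  shows "\<bar>(\<Sum>i\<in>UNIV. x$i * ((\<sigma> + 2*y$i) powr (-k) - (\<sigma> - 2*y$i) powr (-k)))
      - \<sigma> powr (-k) * (- 4 * k * inner x y / \<sigma>)\<bar>
      \<le> norm x * \<sigma> powr (-k) * (k*(k+1)*(k+2)/3 * (8 * (norm y)^3 / \<sigma>^3) + 2 * tM k * (16 * (norm y)^4 / \<sigma>^4))"
proof -
  have sp: "\<sigma> > 0" unfolding \<sigma>_def using b by (simp add: add_nonneg_pos)
  define q where "q i = 2 * y$i / \<sigma>" for i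
  define K where "K = k*(k+1)*(k+2)/3"
  have K: "K \<ge> 0" unfolding K_def using k by simp
  have per: "\<bar>(\<sigma> + 2*y$i) powr (-k) - (\<sigma> - 2*y$i) powr (-k) - \<sigma> powr (-k) * (- 2*k*(q i) - K*(q i)^3)\<bar>
      \<le> \<sigma> powr (-k) * (2 * tM k * (q i)^4)" for i
    unfolding q_def K_def by (rule scalar_odd[OF k sp]) (use coord_small[OF b, of y i] in \<open>simp add: \<sigma>_def\<close>)
  have sq: "(\<Sum>i\<in>UNIV. (q i)^2) = 4 * (norm y)^2 / \<sigma>^2"
    unfolding q_def norm2_sum by (simp add: power_divide power_mult_distrib sum_divide_distrib sum_distrib_left)
  have qi: "(q i)^2 \<le> 4 * (norm y)^2 / \<sigma>^2" for i
    unfolding q_def using sq_le_sum[of y i] sp by (simp add: power_divide power_mult_distrib divide_right_mono)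
  have qa: "\<bar>q i\<bar> \<le> 2 * norm y / \<sigma>" for i
    unfolding q_def using component_le_norm_cart[of y i] sp by (simp add: abs_divide abs_mult divide_right_mono)
  have q4: "(\<Sum>i\<in>UNIV. (q i)^4) \<le> 16 * (norm y)^4 / \<sigma>^4"
  proof -
    have "(\<Sum>i\<in>UNIV. (q i)^4) \<le> (\<Sum>i\<in>UNIV. (4 * (norm y)^2 / \<sigma>^2) * (q i)^2)"
    proof (rule sum_mono)
      fix i show "(q i)^4 \<le> (4 * (norm y)^2 / \<sigma>^2) * (q i)^2"
        using mult_right_mono[OF qi[of i], of "(q i)^2"] by (simp add: power4_eq_xxxx power2_eq_square)
    qed
    also have "\<dots> = (4 * (norm y)^2 / \<sigma>^2) * (\<Sum>i\<in>UNIV. (q i)^2)"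
      by (rule sum_distrib_left[symmetric])
    also have "\<dots> = 16 * (norm y)^4 / \<sigma>^4"
      unfolding sq by (simp add: power4_eq_xxxx power2_eq_square)
    finally show ?thesis .
  qed
  have q3: "(\<Sum>i\<in>UNIV. \<bar>q i\<bar>^3) \<le> 8 * (norm y)^3 / \<sigma>^3"
  proof -
    have "(\<Sum>i\<in>UNIV. \<bar>q i\<bar>^3) \<le> (\<Sum>i\<in>UNIV. (2 * norm y / \<sigma>) * (q i)^2)"
    proof (rule sum_mono)
      fix i show "\<bar>q i\<bar>^3 \<le> (2 * norm y / \<sigma>) * (q i)^2"
        using mult_right_mono[OF qa[of i], of "(q i)^2"] by (simp add: power3_eq_cube power2_eq_square)
    qed
    also have "\<dots> = (2 * norm y / \<sigma>) * (\<Sum>i\<in>UNIV. (q i)^2)"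
      by (rule sum_distrib_left[symmetric])
    also have "\<dots> = 8 * (norm y)^3 / \<sigma>^3"
      unfolding sq by (simp add: power3_eq_cube power2_eq_square)
    finally show ?thesis .
  qed
  have lin: "(\<Sum>i\<in>UNIV. x$i * (\<sigma> powr (-k) * (- 2*k*(q i)))) = \<sigma> powr (-k) * (- 4 * k * inner x y / \<sigma>)"
    unfolding q_def inner_sum by (simp add: sum_distrib_left sum_divide_distrib algebra_simps)
  have per2: "\<bar>x$i * ((\<sigma> + 2*y$i) powr (-k) - (\<sigma> - 2*y$i) powr (-k)) - x$i * (\<sigma> powr (-k) * (- 2*k*(q i)))\<bar>
     \<le> norm x * (\<sigma> powr (-k) * (K * \<bar>q i\<bar>^3 + 2 * tM k * (q i)^4))" for i
  proof -
    define a where "a = (\<sigma> + 2*y$i) powr (-k) - (\<sigma> - 2*y$i) powr (-k) - \<sigma> powr (-k) * (- 2*k*(q i) - K*(q i)^3)"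
    have eqa: "(\<sigma> + 2*y$i) powr (-k) - (\<sigma> - 2*y$i) powr (-k) - \<sigma> powr (-k) * (- 2*k*(q i)) = a - \<sigma> powr (-k) * K * (q i)^3"
      unfolding a_def by (simp add: algebra_simps)
    have abq: "\<bar>\<sigma> powr (-k) * K * (q i)^3\<bar> = \<sigma> powr (-k) * (K * \<bar>q i\<bar>^3)"
      using K by (simp add: abs_mult power_abs)
    have "\<bar>(\<sigma> + 2*y$i) powr (-k) - (\<sigma> - 2*y$i) powr (-k) - \<sigma> powr (-k) * (- 2*k*(q i))\<bar>
       \<le> \<bar>a\<bar> + \<sigma> powr (-k) * (K * \<bar>q i\<bar>^3)"
      unfolding eqa abq[symmetric] by (rule abs_triangle_ineq4)
    also have "\<dots> \<le> \<sigma> powr (-k) * (K * \<bar>q i\<bar>^3 + 2 * tM k * (q i)^4)"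
      using per[of i] unfolding a_def by (simp add: algebra_simps)
    finally have "\<bar>(\<sigma> + 2*y$i) powr (-k) - (\<sigma> - 2*y$i) powr (-k) - \<sigma> powr (-k) * (- 2*k*(q i))\<bar>
       \<le> \<sigma> powr (-k) * (K * \<bar>q i\<bar>^3 + 2 * tM k * (q i)^4)" .
    moreover have "\<sigma> powr (-k) * (K * \<bar>q i\<bar>^3 + 2 * tM k * (q i)^4) \<ge> 0"
      using K tM_nonneg[OF k] by simp
    ultimately have "\<bar>x$i\<bar> * \<bar>(\<sigma> + 2*y$i) powr (-k) - (\<sigma> - 2*y$i) powr (-k) - \<sigma> powr (-k) * (- 2*k*(q i))\<bar>
        \<le> norm x * (\<sigma> powr (-k) * (K * \<bar>q i\<bar>^3 + 2 * tM k * (q i)^4))"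
      using component_le_norm_cart[of x i] by (intro mult_mono) auto
    moreover have "x$i * ((\<sigma> + 2*y$i) powr (-k) - (\<sigma> - 2*y$i) powr (-k)) - x$i * (\<sigma> powr (-k) * (- 2*k*(q i)))
       = x$i * ((\<sigma> + 2*y$i) powr (-k) - (\<sigma> - 2*y$i) powr (-k) - \<sigma> powr (-k) * (- 2*k*(q i)))"
      by (simp only: right_diff_distrib)
    ultimately show ?thesis by (simp only: abs_mult)
  qed
  have "\<bar>(\<Sum>i\<in>UNIV. x$i * ((\<sigma> + 2*y$i) powr (-k) - (\<sigma> - 2*y$i) powr (-k))) - (\<Sum>i\<in>UNIV. x$i * (\<sigma> powr (-k) * (- 2*k*(q i))))\<bar>
      \<le> (\<Sum>i\<in>UNIV. \<bar>x$i * ((\<sigma> + 2*y$i) powr (-k) - (\<sigma> - 2*y$i) powr (-k)) - x$i * (\<sigma> powr (-k) * (- 2*k*(q i)))\<bar>)"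
    by (simp only: sum_subtractf[symmetric] sum_abs)
  also have "\<dots> \<le> (\<Sum>i\<in>UNIV. norm x * (\<sigma> powr (-k) * (K * \<bar>q i\<bar>^3 + 2 * tM k * (q i)^4)))"
    by (rule sum_mono) (rule per2)
  also have "\<dots> = norm x * \<sigma> powr (-k) * (K * (\<Sum>i\<in>UNIV. \<bar>q i\<bar>^3) + 2 * tM k * (\<Sum>i\<in>UNIV. (q i)^4))"
    by (simp add: sum_distrib_left sum.distrib algebra_simps)
  also have "\<dots> \<le> norm x * \<sigma> powr (-k) * (K * (8 * (norm y)^3 / \<sigma>^3) + 2 * tM k * (16 * (norm y)^4 / \<sigma>^4))"
    using K tM_nonneg[OF k] q3 q4
    by (intro mult_left_mono add_mono) auto
  finally have F: "\<bar>(\<Sum>i\<in>UNIV. x$i * ((\<sigma> + 2*y$i) powr (-k) - (\<sigma> - 2*y$i) powr (-k))) - (\<Sum>i\<in>UNIV. x$i * (\<sigma> powr (-k) * (- 2*k*(q i))))\<bar>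
     \<le> norm x * \<sigma> powr (-k) * (K * (8 * (norm y)^3 / \<sigma>^3) + 2 * tM k * (16 * (norm y)^4 / \<sigma>^4))" .
  show ?thesis using F unfolding lin K_def .
qed

lemma core_P_identity:
  fixes d g r b \<mu> :: real
  assumes s: "\<sigma> = r^2 + 1 + b" and sp: "\<sigma> > 0"
  shows "((g-1)*(2*d + 4*(d/2)*(d/2+1)*r^2/\<sigma>^2) - 2*(-4*(d/2)*((r^2 - g - \<mu>)/2)/\<sigma>) - 2*d*g - 2*d*g*(d/2)/\<sigma>)
    = -((2*d*\<sigma>*(1+b+\<mu>) + d*(d+2)*g*(1+b) + d*(d+2)*r^2)/\<sigma>^2)"
proof -
  have ne: "\<sigma> \<noteq> 0" using sp by simp
  have "((g-1)*(2*d + 4*(d/2)*(d/2+1)*r^2/\<sigma>^2) - 2*(-4*(d/2)*((r^2 - g - \<mu>)/2)/\<sigma>) - 2*d*g - 2*d*g*(d/2)/\<sigma>) * \<sigma>^2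
    = (g-1)*(2*d*\<sigma>^2 + d*(d+2)*r^2) + 2*d*\<sigma>*(r^2 - g - \<mu>) - 2*d*g*\<sigma>^2 - d*d*g*\<sigma>"
    using ne by (simp add: field_simps power2_eq_square)
  also have "\<dots> = -(2*d*\<sigma>*(1+b+\<mu>) + d*(d+2)*g*(1+b) + d*(d+2)*r^2)"
    unfolding s by (simp add: power2_eq_square algebra_simps)
  finally show ?thesis using ne by (simp add: field_simps)
qed

lemma ratio_facts:
  fixes r \<sigma> :: real
  assumes "r \<ge> 0" "r^2 \<le> \<sigma>" "\<sigma> \<ge> 1"
  shows "r^4/\<sigma>^4 \<le> 1/\<sigma>^2" "r^3/\<sigma>^3 \<le> r/\<sigma>^2"
proof -
  have sp: "\<sigma> > 0" using assms by simp
  have "r^4 \<le> \<sigma>^2" using power_mono[OF assms(2), of 2] assms(1) by (simp add: power_mult[symmetric])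
  then show "r^4/\<sigma>^4 \<le> 1/\<sigma>^2" using sp by (simp add: field_simps power2_eq_square power4_eq_xxxx) 
  have "r^3 * \<sigma>^2 \<le> r * \<sigma>^3"
  proof -
    have "r^3 * \<sigma>^2 = r * r^2 * \<sigma>^2" by (simp add: power2_eq_square power3_eq_cube)
    also have "\<dots> \<le> r * \<sigma> * \<sigma>^2" using assms sp by (intro mult_right_mono mult_left_mono) auto
    finally show ?thesis by (simp add: power2_eq_square power3_eq_cube mult_ac)
  qed
  then show "r^3/\<sigma>^3 \<le> r/\<sigma>^2" using sp by (simp add: field_simps)
qed

lemma amgm_lin:
  fixes d K r :: real
  assumes "d > 0"
  shows "8*K*r \<le> d*r^2 + 16*K^2/d"
proof -
  have "0 \<le> d * (r - 4*K/d)^2" using assms by simp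
  also have "\<dots> = d*r^2 - 8*K*r + 16*K^2/d" using assms by (simp add: power2_eq_square field_simps)
  finally show ?thesis by simp
qed

lemma core_P:
  fixes d g r b \<mu> xn xy Se So p P1 K tMk \<sigma> :: real
  assumes d3: "d \<ge> 3" and s: "\<sigma> = r^2 + 1 + b" and r0: "r \<ge> 0" and b3: "b \<ge> 3"
   and xn0: "xn \<ge> 0" and mu: "\<mu> \<ge> 2*xn" and g0: "g \<ge> 0"
   and xy: "xy = (r^2 - g - \<mu>)/2"
   and p: "p > 0"
   and Se: "\<bar>Se - p*(2*d + 4*(d/2)*(d/2+1)*r^2/\<sigma>^2)\<bar> \<le> p*(2*tMk*16*r^4/\<sigma>^4)"
   and So: "\<bar>So - p*(-4*(d/2)*xy/\<sigma>)\<bar> \<le> xn*p*(K*(8*r^3/\<sigma>^3) + 2*tMk*(16*r^4/\<sigma>^4))"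
   and P1: "P1 \<ge> p*(1 + (d/2)/\<sigma>)"
   and K0: "K \<ge> 0" and tM0: "tMk \<ge> 0"
   and bK: "32*tMk \<le> d*(1+b)"
   and bK2: "16*K^2/d + 32*tMk \<le> d*(1+b)"
  shows "(g-1)*Se - 2*So \<le> 2*d*g*P1"
proof -
  have sg: "\<sigma> \<ge> 4" using s b3 zero_le_power2[of r] by linarith
  have sp: "\<sigma> > 0" using sg by simp
  have rs: "r^2 \<le> \<sigma>" using s b3 by simp
  have dp: "d > 0" using d3 by simp
  note rf = ratio_facts[OF r0 rs, OF order_trans[OF _ sg], simplified]
  define A where "A = 2*d + 4*(d/2)*(d/2+1)*r^2/\<sigma>^2"
  define B where "B = -4*(d/2)*xy/\<sigma>"
  define e1 where "e1 = Se/p - A"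
  define e2 where "e2 = So/p - B"
  have Se': "Se = p*(A + e1)" using p by (simp add: e1_def)
  have So': "So = p*(B + e2)" using p by (simp add: e2_def)
  have "\<bar>e1\<bar> = \<bar>Se - p*A\<bar>/p" using p by (simp add: e1_def field_simps abs_divide)
  also have "\<dots> \<le> (p*(2*tMk*16*r^4/\<sigma>^4))/p" using Se p unfolding A_def by (intro divide_right_mono) auto
  also have "\<dots> = 32*tMk*(r^4/\<sigma>^4)" using p by simp
  also have "\<dots> \<le> 32*tMk*(1/\<sigma>^2)" using rf(1) tM0 by (intro mult_left_mono) auto
  finally have e1b: "\<bar>e1\<bar> \<le> 32*tMk/\<sigma>^2" by simp
  have "\<bar>e2\<bar> = \<bar>So - p*B\<bar>/p" using p by (simp add: e2_def field_simps abs_divide)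
  also have "\<dots> \<le> (xn*p*(K*(8*r^3/\<sigma>^3) + 2*tMk*(16*r^4/\<sigma>^4)))/p" using So p unfolding B_def by (intro divide_right_mono) auto
  also have "\<dots> = xn*(K*(8*r^3/\<sigma>^3) + 2*tMk*(16*r^4/\<sigma>^4))" using p by simp
  also have "\<dots> = xn*(8*K*(r^3/\<sigma>^3) + 32*tMk*(r^4/\<sigma>^4))" by (simp add: algebra_simps)
  also have "\<dots> \<le> xn*(8*K*(r/\<sigma>^2) + 32*tMk*(1/\<sigma>^2))"
    using rf K0 tM0 xn0 by (intro mult_left_mono add_mono) auto
  also have "\<dots> = xn*(8*K*r + 32*tMk)/\<sigma>^2" by (simp add: add_divide_distrib algebra_simps)
  finally have e2b: "\<bar>e2\<bar> \<le> xn*(8*K*r + 32*tMk)/\<sigma>^2" .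
  have t1: "(g-1)*e1 \<le> (g+1)*(32*tMk/\<sigma>^2)"
  proof -
    have "(g-1)*e1 \<le> \<bar>g-1\<bar>*\<bar>e1\<bar>" by (metis abs_ge_self abs_mult)
    also have "\<dots> \<le> (g+1)*(32*tMk/\<sigma>^2)" using e1b g0 by (intro mult_mono) auto
    finally show ?thesis .
  qed
  have t2: "-2*e2 \<le> 2*(xn*(8*K*r + 32*tMk)/\<sigma>^2)" using e2b by linarith
  have idt: "(g-1)*A - 2*B - 2*d*g - 2*d*g*(d/2)/\<sigma> = -((2*d*\<sigma>*(1+b+\<mu>) + d*(d+2)*g*(1+b) + d*(d+2)*r^2)/\<sigma>^2)"
    unfolding A_def B_def xy by (rule core_P_identity[OF s sp])
  have G: "(g+1)*(32*tMk) + 2*(xn*(8*K*r + 32*tMk)) \<le> 2*d*\<sigma>*(1+b+\<mu>) + d*(d+2)*g*(1+b) + d*(d+2)*r^2"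
  proof -
    have a1: "g*(32*tMk) \<le> d*(d+2)*g*(1+b)"
    proof -
      have h0: "d*(1+b) \<ge> 0" using dp b3 by simp
      have "d*(1+b)*1 \<le> d*(1+b)*(d+2)" using h0 d3 by (intro mult_left_mono) auto
      moreover have "d*(d+2)*(1+b) = d*(1+b)*(d+2)" by (simp add: mult_ac)
      ultimately have "32*tMk \<le> d*(d+2)*(1+b)" using bK by linarith
      then have "g*(32*tMk) \<le> g*(d*(d+2)*(1+b))" using g0 by (rule mult_left_mono)
      then show ?thesis by (simp add: mult_ac)
    qed
    have a2: "32*tMk \<le> 2*d*\<sigma>*(1+b)"
    proof -
      have "d*(1+b) \<le> 2*d*\<sigma>*(1+b)" using dp b3 sg by (simp add: mult_right_mono mult_left_mono)
      then show ?thesis using bK by linarith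
    qed
    have a3: "8*K*r + 32*tMk \<le> 2*d*\<sigma>"
    proof -
      have "8*K*r \<le> d*r^2 + 16*K^2/d" by (rule amgm_lin[OF dp])
      moreover have "d*r^2 \<ge> 0" using dp by simp
      moreover have "d*(1+b) \<ge> 0" using dp b3 by simp
      moreover have "2*d*\<sigma> = 2*(d*r^2) + 2*(d*(1+b))" by (simp add: s algebra_simps)
      ultimately show ?thesis using bK2 by linarith
    qed
    have a4: "2*(xn*(8*K*r + 32*tMk)) \<le> 2*d*\<sigma>*\<mu>"
    proof -
      have "xn*(8*K*r + 32*tMk) \<le> xn*(2*d*\<sigma>)" using a3 xn0 by (rule mult_left_mono)
      then have "2*(xn*(8*K*r + 32*tMk)) \<le> 2*(xn*(2*d*\<sigma>))" by linarith
      also have "\<dots> = d*\<sigma>*(2*xn)*2" by simp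
      also have "\<dots> \<le> d*\<sigma>*\<mu>*2" using mu dp sp by (simp add: mult_left_mono)
      finally show ?thesis by simp
    qed
    have "d*(d+2)*r^2 \<ge> 0" using dp by simp
    then show ?thesis using a1 a2 a4 by (simp add: algebra_simps)
  qed
  have br: "(g-1)*(A + e1) - 2*(B + e2) \<le> 2*d*g*(1 + (d/2)/\<sigma>)"
  proof -
    have "(g-1)*(A + e1) - 2*(B + e2) = ((g-1)*A - 2*B) + ((g-1)*e1 - 2*e2)" by (simp add: algebra_simps)
    also have "\<dots> \<le> ((g-1)*A - 2*B) + ((g+1)*(32*tMk) + 2*(xn*(8*K*r + 32*tMk)))/\<sigma>^2"
      using t1 t2 by (simp add: add_divide_distrib)
    also have "\<dots> \<le> ((g-1)*A - 2*B) + (2*d*\<sigma>*(1+b+\<mu>) + d*(d+2)*g*(1+b) + d*(d+2)*r^2)/\<sigma>^2"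
      using G sp by (simp add: divide_right_mono)
    also have "\<dots> = 2*d*g + 2*d*g*(d/2)/\<sigma>" using idt by linarith
    also have "\<dots> = 2*d*g*(1 + (d/2)/\<sigma>)" by (simp add: algebra_simps)
    finally show ?thesis .
  qed
  have "(g-1)*Se - 2*So = p*((g-1)*(A + e1) - 2*(B + e2))" unfolding Se' So' by (simp add: algebra_simps)
  also have "\<dots> \<le> p*(2*d*g*(1 + (d/2)/\<sigma>))" using br p by (simp add: mult_left_mono)
  also have "\<dots> = 2*d*g*(p*(1 + (d/2)/\<sigma>))" by simp
  also have "\<dots> \<le> 2*d*g*P1" using P1 g0 dp by (intro mult_left_mono) auto
  finally show ?thesis .
qed

lemma core_G:
  fixes d r b Se p P1 tMk \<sigma> \<alpha> :: real
  assumes d3: "d \<ge> 3" and al: "\<alpha> = (d-2)/2" and s: "\<sigma> = r^2 + 1 + b" and r0: "r \<ge> 0" and b3: "b \<ge> 3"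
   and p: "p > 0"
   and Se: "\<bar>Se - p*(2*d + \<alpha>*(\<alpha>+1)*4*r^2/\<sigma>^2)\<bar> \<le> p*(2*tMk*16*r^4/\<sigma>^4)"
   and P1: "P1 \<ge> p*(1 + \<alpha>/\<sigma>)"
   and tM0: "tMk \<ge> 0"
   and bK: "32*tMk \<le> 2*d*\<alpha>*(1+b)"
  shows "Se \<le> 2*d*P1"
proof -
  have sg: "\<sigma> \<ge> 4" using s b3 zero_le_power2[of r] by linarith
  have sp: "\<sigma> > 0" using sg by simp
  have rs: "r^2 \<le> \<sigma>" using s b3 by simp
  note rf = ratio_facts[OF r0 rs, OF order_trans[OF _ sg], simplified]
  have "p*(2*tMk*16*r^4/\<sigma>^4) = p*(32*tMk*(r^4/\<sigma>^4))" by simp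
  also have "\<dots> \<le> p*(32*tMk*(1/\<sigma>^2))" using rf(1) tM0 p by (intro mult_left_mono) auto
  finally have e: "p*(2*tMk*16*r^4/\<sigma>^4) \<le> p*(32*tMk/\<sigma>^2)" by simp
  have main: "2*d + \<alpha>*(\<alpha>+1)*4*r^2/\<sigma>^2 + 32*tMk/\<sigma>^2 \<le> 2*d*(1 + \<alpha>/\<sigma>)"
  proof -
    have dd: "d = 2*\<alpha>+2" using al by simp
    have "\<alpha>*(\<alpha>+1)*4 = 2*d*\<alpha>" unfolding dd by (simp add: algebra_simps)
    then have "\<alpha>*(\<alpha>+1)*4*r^2 + 32*tMk \<le> 2*d*\<alpha>*\<sigma>" using bK s by (simp add: algebra_simps)
    then have "(\<alpha>*(\<alpha>+1)*4*r^2 + 32*tMk)/\<sigma>^2 \<le> (2*d*\<alpha>*\<sigma>)/\<sigma>^2" using sp by (simp add: divide_right_mono)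
    also have "\<dots> = 2*d*\<alpha>/\<sigma>" using sp by (simp add: power2_eq_square)
    finally have "(\<alpha>*(\<alpha>+1)*4*r^2 + 32*tMk)/\<sigma>^2 \<le> 2*d*\<alpha>/\<sigma>" .
    then show ?thesis by (simp add: add_divide_distrib algebra_simps)
  qed
  have "Se \<le> p*(2*d + \<alpha>*(\<alpha>+1)*4*r^2/\<sigma>^2) + p*(32*tMk/\<sigma>^2)" using Se e by linarith
  also have "\<dots> = p*(2*d + \<alpha>*(\<alpha>+1)*4*r^2/\<sigma>^2 + 32*tMk/\<sigma>^2)" by (simp add: algebra_simps)
  also have "\<dots> \<le> p*(2*d*(1 + \<alpha>/\<sigma>))" using main p by (intro mult_left_mono) auto
  also have "\<dots> = 2*d*(p*(1 + \<alpha>/\<sigma>))" by simp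
  also have "\<dots> \<le> 2*d*P1" using P1 d3 by (intro mult_left_mono) auto
  finally show ?thesis .
qed

lemma powr_lower_shift:
  fixes \<sigma> k :: real
  assumes "k > 0" "\<sigma> \<ge> 2"
  shows "(\<sigma> - 1) powr (-k) \<ge> \<sigma> powr (-k) * (1 + k/\<sigma>)"
proof -
  have "(\<sigma> + (-1)) powr (-k) = \<sigma> powr (-k) * (1 + (-1)/\<sigma>) powr (-k)"
    by (rule powr_split) (use assms in auto)
  moreover have "(1 + (-1)/\<sigma>) powr (-k) \<ge> 1 - k*((-1)/\<sigma>)"
    by (rule taylor2_lower) (use assms in \<open>auto simp: abs_divide\<close>)
  ultimately show ?thesis using assms by (simp add: mult_left_mono)
qed

definition Kc :: "real \<Rightarrow> real" where "Kc k = k*(k+1)*(k+2)/3"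

definition bconst :: "real \<Rightarrow> real" where
  "bconst d = 4 + 64 * tM (d/2) + 16 * (Kc (d/2))^2 + 64 * tM ((d-2)/2)"

lemma bconst_aux:
  fixes b x y z d :: real
  assumes b: "b = 4 + 64*x + 16*y + 64*z" and x: "x \<ge> 0" and y: "y \<ge> 0" and z: "z \<ge> 0" and d3: "d \<ge> 3"
  shows "b \<ge> 3" "32*x \<le> d*(1+b)" "16*y/d + 32*x \<le> d*(1+b)" "32*z \<le> 2*d*((d-2)/2)*(1+b)"
proof -
  show b3: "b \<ge> 3" using b x y z by linarith
  have db: "3 * (1 + b) \<le> d * (1 + b)" using d3 b3 by (intro mult_right_mono) auto
  have "32*x \<le> 3*(1+b)" using b x y z by (simp add: algebra_simps)
  then show "32*x \<le> d*(1+b)" using db by (rule order_trans)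
  have "16*y/d \<le> 16*y/3" using d3 y by (intro divide_left_mono) auto
  moreover have "16*y/3 + 32*x \<le> 3*(1+b)" using b x y z by (simp add: algebra_simps)
  ultimately have "16*y/d + 32*x \<le> 3*(1+b)" by linarith
  then show "16*y/d + 32*x \<le> d*(1+b)" using db by (rule order_trans)
  have e: "2*d*((d-2)/2) = d*(d-2)" by simp
  have "d*(d-2) \<ge> 3*1" using d3 by (intro mult_mono) auto
  then have "3*(1+b) \<le> d*(d-2)*(1+b)" using b3 by (intro mult_right_mono) auto
  moreover have "32*z \<le> 3*(1+b)" using b x y z by (simp add: algebra_simps)
  ultimately show "32*z \<le> 2*d*((d-2)/2)*(1+b)" unfolding e by linarith
qed

lemma bconst_props:
  fixes d :: real assumes d3: "d \<ge> 3"
  shows "bconst d \<ge> 3" "32 * tM (d/2) \<le> d * (1 + bconst d)"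
    "16 * (Kc (d/2))^2 / d + 32 * tM (d/2) \<le> d * (1 + bconst d)"
    "32 * tM ((d-2)/2) \<le> 2*d*((d-2)/2)*(1 + bconst d)"
proof -
  have t1: "tM (d/2) \<ge> 0" by (rule tM_nonneg) (use d3 in simp)
  have t2: "tM ((d-2)/2) \<ge> 0" by (rule tM_nonneg) (use d3 in simp)
  have k2: "(Kc (d/2))^2 \<ge> 0" by simp
  note B = bconst_aux[OF bconst_def t1 k2 t2 d3]
  show "bconst d \<ge> 3" by (rule B(1))
  show "32 * tM (d/2) \<le> d * (1 + bconst d)" by (rule B(2))
  show "16 * (Kc (d/2))^2 / d + 32 * tM (d/2) \<le> d * (1 + bconst d)" using B(3) by simp
  show "32 * tM ((d-2)/2) \<le> 2*d*((d-2)/2)*(1 + bconst d)" by (rule B(4))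
qed

definition Gam :: "real \<Rightarrow> (real^'n) \<Rightarrow> real" where
  "Gam d u = ((norm u)^2 + bconst d) powr (-((d-2)/2))"

lemma gamma_super:
  fixes u :: "real^'n"
  assumes d3: "CARD('n) \<ge> 3"
  shows "(\<Sum>i\<in>UNIV. Gam CARD('n) (u + axis i 1) + Gam CARD('n) (u - axis i 1)) \<le> 2 * CARD('n) * Gam CARD('n) u"
proof -
  define d :: real where "d = CARD('n)"
  have d3': "d \<ge> 3" using d3 unfolding d_def by simp
  define \<alpha> where "\<alpha> = (d-2)/2"
  define b where "b = bconst d"
  note bp = bconst_props[OF d3', folded b_def]
  have al0: "\<alpha> > 0" using d3' unfolding \<alpha>_def by simp
  define r where "r = norm u"
  define \<sigma> where "\<sigma> = r^2 + 1 + b"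
  have sg: "\<sigma> \<ge> 4" using bp(1) zero_le_power2[of r] unfolding \<sigma>_def by linarith
  have e1: "Gam CARD('n) (u + axis i 1) = (\<sigma> + 2*(u$i)) powr (-\<alpha>)" for i
    unfolding Gam_def norm2_plus_axis \<sigma>_def r_def \<alpha>_def b_def d_def by (simp add: algebra_simps)
  have e2: "Gam CARD('n) (u - axis i 1) = (\<sigma> - 2*(u$i)) powr (-\<alpha>)" for i
    unfolding Gam_def norm2_minus_axis \<sigma>_def r_def \<alpha>_def b_def d_def by (simp add: algebra_simps)
  have e0: "Gam CARD('n) u = (\<sigma> - 1) powr (-\<alpha>)"
    unfolding Gam_def \<sigma>_def r_def \<alpha>_def b_def d_def by (simp add: algebra_simps)
  note SE = sum_even[OF al0 bp(1), of u, folded r_def, folded \<sigma>_def]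
  have "(\<Sum>i\<in>UNIV. (\<sigma> + 2*(u$i)) powr (-\<alpha>) + (\<sigma> - 2*(u$i)) powr (-\<alpha>)) \<le> 2*d*((\<sigma> - 1) powr (-\<alpha>))"
  proof (rule core_G[OF d3' \<alpha>_def \<sigma>_def _ bp(1)])
    show "0 \<le> r" unfolding r_def by simp
    show "\<sigma> powr (-\<alpha>) > 0" using sg by simp
    show "\<bar>(\<Sum>i\<in>UNIV. (\<sigma> + 2*(u$i)) powr (-\<alpha>) + (\<sigma> - 2*(u$i)) powr (-\<alpha>)) - \<sigma> powr (-\<alpha>) * (2*d + \<alpha>*(\<alpha>+1)*4*r^2/\<sigma>^2)\<bar>
       \<le> \<sigma> powr (-\<alpha>) * (2*tM \<alpha>*16*r^4/\<sigma>^4)" using SE unfolding d_def by simp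
    show "(\<sigma> - 1) powr (-\<alpha>) \<ge> \<sigma> powr (-\<alpha>) * (1 + \<alpha>/\<sigma>)"
      by (rule powr_lower_shift) (use al0 sg in auto)
    show "tM \<alpha> \<ge> 0" by (rule tM_nonneg[OF al0])
    show "32 * tM \<alpha> \<le> 2 * d * \<alpha> * (1 + b)" using bp(4) unfolding \<alpha>_def .
  qed
  then show ?thesis unfolding e0 e1 e2 d_def by simp
qed

definition Pk :: "real \<Rightarrow> real \<Rightarrow> (real^'n) \<Rightarrow> (real^'n) \<Rightarrow> real" where
  "Pk d c w u = (c - (norm u)^2) * ((norm (u - w))^2 + bconst d) powr (-(d/2))"

lemma P_super:
  fixes x w :: "real^'n" and c :: real
  assumes d3: "CARD('n) \<ge> 3" and xc: "(norm x)^2 \<le> c" and wc: "2 * norm x \<le> (norm w)^2 - c"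
  shows "(\<Sum>i\<in>UNIV. Pk CARD('n) c w (x + axis i 1) + Pk CARD('n) c w (x - axis i 1)) \<le> 2 * CARD('n) * Pk CARD('n) c w x"
proof -
  define d :: real where "d = CARD('n)"
  have d3': "d \<ge> 3" using d3 unfolding d_def by simp
  define k where "k = d/2"
  define b where "b = bconst d"
  note bp = bconst_props[OF d3', folded b_def]
  have k0: "k > 0" using d3' unfolding k_def by simp
  define y where "y = x - w"
  define r where "r = norm y"
  define \<sigma> where "\<sigma> = r^2 + 1 + b"
  define g where "g = c - (norm x)^2"
  define \<mu> where "\<mu> = (norm w)^2 - c"
  have sg: "\<sigma> \<ge> 4" using bp(1) zero_le_power2[of r] unfolding \<sigma>_def by linarith
  have e1: "Pk CARD('n) c w (x + axis i 1) = (g - 1 - 2*(x$i)) * (\<sigma> + 2*(y$i)) powr (-k)" for i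
  proof -
    have "x + axis i 1 - w = y + axis i 1" unfolding y_def by simp
    then show ?thesis unfolding Pk_def norm2_plus_axis g_def \<sigma>_def r_def k_def b_def d_def
      by (simp add: norm2_plus_axis algebra_simps)
  qed
  have e2: "Pk CARD('n) c w (x - axis i 1) = (g - 1 + 2*(x$i)) * (\<sigma> - 2*(y$i)) powr (-k)" for i
  proof -
    have "x - axis i 1 - w = y - axis i 1" unfolding y_def by simp
    then show ?thesis unfolding Pk_def norm2_minus_axis g_def \<sigma>_def r_def k_def b_def d_def
      by (simp add: norm2_minus_axis algebra_simps)
  qed
  have e0: "Pk CARD('n) c w x = g * (\<sigma> - 1) powr (-k)"
    unfolding Pk_def g_def \<sigma>_def r_def k_def b_def d_def y_def by (simp add: algebra_simps)
  define Se where "Se = (\<Sum>i\<in>UNIV. (\<sigma> + 2*(y$i)) powr (-k) + (\<sigma> - 2*(y$i)) powr (-k))"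
  define So where "So = (\<Sum>i\<in>UNIV. x$i * ((\<sigma> + 2*(y$i)) powr (-k) - (\<sigma> - 2*(y$i)) powr (-k)))"
  have split: "(\<Sum>i\<in>UNIV. Pk CARD('n) c w (x + axis i 1) + Pk CARD('n) c w (x - axis i 1)) = (g-1)*Se - 2*So"
  proof -
    have "(\<Sum>i\<in>UNIV. Pk CARD('n) c w (x + axis i 1) + Pk CARD('n) c w (x - axis i 1))
      = (\<Sum>i\<in>UNIV. (g-1)*((\<sigma> + 2*(y$i)) powr (-k) + (\<sigma> - 2*(y$i)) powr (-k)) - 2*(x$i * ((\<sigma> + 2*(y$i)) powr (-k) - (\<sigma> - 2*(y$i)) powr (-k))))"
      unfolding e1 e2 by (rule sum.cong) (auto simp: algebra_simps)
    also have "\<dots> = (g-1)*Se - 2*So" unfolding Se_def So_def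
      by (simp add: sum_subtractf sum_distrib_left)
    finally show ?thesis .
  qed
  note SE = sum_even[OF k0 bp(1), of y, folded r_def, folded \<sigma>_def]
  note SO = sum_odd[OF k0 bp(1), of x y, folded r_def, folded \<sigma>_def]
  have xy: "inner x y = (r^2 - g - \<mu>)/2"
  proof -
    have "r^2 = (norm x)^2 - 2 * inner x w + (norm w)^2"
      unfolding r_def y_def by (simp add: power2_norm_eq_inner inner_diff_left inner_diff_right inner_commute)
    moreover have "inner x y = (norm x)^2 - inner x w"
      unfolding y_def by (simp add: power2_norm_eq_inner inner_diff_right)
    ultimately show ?thesis unfolding g_def \<mu>_def by (simp add: field_simps)
  qed
  have "(g-1)*Se - 2*So \<le> 2*d*g*((\<sigma> - 1) powr (-k))"
  proof (rule core_P[OF d3' \<sigma>_def _ bp(1) _ _ _ xy])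
    show "0 \<le> r" unfolding r_def by simp
    show "0 \<le> norm x" by simp
    show "2 * norm x \<le> \<mu>" using wc unfolding \<mu>_def .
    show "0 \<le> g" using xc unfolding g_def by simp
    show "\<sigma> powr (-k) > 0" using sg by simp
    show "\<bar>Se - \<sigma> powr (-k) * (2*d + 4*(d/2)*(d/2+1)*r^2/\<sigma>^2)\<bar> \<le> \<sigma> powr (-k) * (2*tM k*16*r^4/\<sigma>^4)"
      using SE unfolding Se_def d_def k_def by (simp add: algebra_simps)
    show "\<bar>So - \<sigma> powr (-k) * (-4*(d/2)*inner x y/\<sigma>)\<bar> \<le> norm x * \<sigma> powr (-k) * (Kc k*(8*r^3/\<sigma>^3) + 2*tM k*(16*r^4/\<sigma>^4))"
      using SO unfolding So_def d_def k_def Kc_def by simp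
    show "(\<sigma> - 1) powr (-k) \<ge> \<sigma> powr (-k) * (1 + (d/2)/\<sigma>)"
      using powr_lower_shift[of k \<sigma>] k0 sg unfolding k_def by simp
    show "Kc k \<ge> 0" unfolding Kc_def using k0 by simp
    show "tM k \<ge> 0" by (rule tM_nonneg[OF k0])
    show "32 * tM k \<le> d * (1 + b)" using bp(2) unfolding k_def .
    show "16 * (Kc k)^2 / d + 32 * tM k \<le> d * (1 + b)" using bp(3) unfolding k_def .
  qed
  then show ?thesis unfolding split e0 d_def by (simp add: mult_ac)
qed

lemma lat_add: "lat (x + y) = lat x + lat y"
  unfolding lat_def by (simp add: vec_eq_iff)

lemma lat_axis_p: "lat (axis i (1::int)) = axis i 1"
  unfolding lat_def by (simp add: vec_eq_iff axis_def)

lemma lat_axis_m: "lat (axis i (-1::int)) = - axis i 1"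
  unfolding lat_def by (simp add: vec_eq_iff axis_def)

lemma lat_zero[simp]: "lat 0 = 0"
  unfolding lat_def by (simp add: vec_eq_iff)

lemma lat_diff: "lat (x - y) = lat x - lat y"
  unfolding lat_def by (simp add: vec_eq_iff)

lemma axis_pm_disj: "axis i (1::int) \<noteq> axis j (-1)"
proof
  assume "axis i (1::int) = axis j (-1)"
  then have "axis i (1::int) $ i = axis j (-1) $ i" by simp
  then show False by (auto simp: axis_def split: if_splits)
qed

lemma inj_axis: "inj (\<lambda>i. axis i (a::int))" if "a \<noteq> 0"
proof (rule injI)
  fix i j assume "axis i a = axis j a"
  then have "axis i a $ i = axis j a $ i" by simp
  then show "i = j" using that by (auto simp: axis_def split: if_splits)
qed

lemma steps_sum:
  fixes f :: "real^'n \<Rightarrow> real" and x :: "int^'n"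
  shows "(\<Sum>e\<in>srw_steps. f (lat (x + e))) = (\<Sum>i\<in>UNIV. f (lat x + axis i 1) + f (lat x - axis i 1))"
proof -
  have d: "range (\<lambda>i. axis i (1::int)) \<inter> range (\<lambda>i. axis i (-1)) = ({} :: (int^'n) set)"
    using axis_pm_disj by blast
  have "(\<Sum>e\<in>srw_steps. f (lat (x + e))) = (\<Sum>e\<in>range (\<lambda>i. axis i (1::int)). f (lat (x + e))) + (\<Sum>e\<in>range (\<lambda>i. axis i (-1::int)). f (lat (x + e)))"
    unfolding srw_steps_eq by (rule sum.union_disjoint) (use d in auto)
  also have "\<dots> = (\<Sum>i\<in>UNIV. f (lat (x + axis i 1))) + (\<Sum>i\<in>UNIV. f (lat (x + axis i (-1))))"
    by (simp add: sum.reindex inj_axis)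
  also have "\<dots> = (\<Sum>i\<in>UNIV. f (lat x + axis i 1) + f (lat x - axis i 1))"
    by (simp add: sum.distrib lat_add lat_axis_p lat_axis_m)
  finally show ?thesis .
qed

lemma card_steps: "card (srw_steps :: (int^'n) set) = 2 * CARD('n)"
proof -
  have d: "range (\<lambda>i. axis i (1::int)) \<inter> range (\<lambda>i. axis i (-1)) = ({} :: (int^'n) set)"
    using axis_pm_disj by blast
  have "card (srw_steps :: (int^'n) set) = card (range (\<lambda>i. axis i (1::int)) :: (int^'n) set) + card (range (\<lambda>i. axis i (-1::int)) :: (int^'n) set)"
    unfolding srw_steps_eq by (rule card_Un_disjoint) (use d in auto)
  also have "\<dots> = 2 * CARD('n)" by (simp add: card_image inj_axis)
  finally show ?thesis .
qed

lemma stage2: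
  fixes z y :: "int^'n"
  assumes d3: "CARD('n) \<ge> 3"
  shows "hitp {z} B n y \<le> bconst CARD('n) powr ((real CARD('n) - 2)/2) * (1 + (norm (lat y - lat z))^2) powr (-((real CARD('n) - 2)/2))"
proof -
  define dr :: real where "dr = CARD('n)"
  define \<alpha> where "\<alpha> = (dr - 2)/2"
  define b where "b = bconst dr"
  have d3': "dr \<ge> 3" using d3 unfolding dr_def by simp
  note bp = bconst_props[OF d3', folded b_def]
  have al0: "\<alpha> > 0" using d3' unfolding \<alpha>_def by simp
  define G0 where "G0 = Gam CARD('n) (0::real^'n)"
  have G0: "G0 = b powr (-\<alpha>)" unfolding G0_def Gam_def b_def \<alpha>_def dr_def by simp
  have G0p: "G0 > 0" unfolding G0 using bp(1) by simp
  define h where "h u = Gam CARD('n) (lat u - lat z) / G0" for u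
  have hz: "h z = 1" unfolding h_def G0_def using G0p[unfolded G0_def] by simp
  have main: "hitp {z} B n y \<le> h y" if "y \<notin> {z}" for y
  proof (rule hitp_compare[of h "{z}" "{z}" B, OF _ _ _ _ that])
    show "0 \<le> h x" for x unfolding h_def Gam_def using G0p by simp
    show "{z} \<subseteq> {z}" by simp
    show "(\<Sum>e\<in>srw_steps. h (x + e)) \<le> card (srw_steps :: (int^'n) set) * h x" for x
    proof -
      have eqs: "\<And>i. lat x + axis i 1 - lat z = (lat x - lat z) + axis i 1"
                "\<And>i. lat x - axis i 1 - lat z = (lat x - lat z) - axis i 1"
        by (simp_all add: algebra_simps)
      have "(\<Sum>e\<in>srw_steps. h (x + e)) = (\<Sum>e\<in>srw_steps. (\<lambda>v. Gam CARD('n) (v - lat z) / G0) (lat (x + e)))"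
        unfolding h_def by simp
      also have "\<dots> = (\<Sum>i\<in>UNIV. Gam CARD('n) (lat x + axis i 1 - lat z) / G0 + Gam CARD('n) (lat x - axis i 1 - lat z) / G0)"
        by (rule steps_sum)
      also have "\<dots> = (\<Sum>i\<in>UNIV. (Gam CARD('n) ((lat x - lat z) + axis i 1) + Gam CARD('n) ((lat x - lat z) - axis i 1)) / G0)"
        by (simp only: eqs add_divide_distrib)
      also have "\<dots> = (\<Sum>i\<in>UNIV. Gam CARD('n) ((lat x - lat z) + axis i 1) + Gam CARD('n) ((lat x - lat z) - axis i 1)) / G0"
        by (rule sum_divide_distrib[symmetric])
      also have "\<dots> \<le> (2 * CARD('n) * Gam CARD('n) (lat x - lat z)) / G0"
        by (rule divide_right_mono[OF gamma_super[OF d3]]) (use G0p in simp)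
      also have "\<dots> = card (srw_steps :: (int^'n) set) * h x" unfolding card_steps h_def by simp
      finally show ?thesis .
    qed
    show "hitp {z} B m (x + e) \<le> h (x + e)" if "x + e \<in> {z}" for x e m
      using that hitp_le1[of "{z}" B m "x+e"] hz by simp
  qed
  have hy: "hitp {z} B n y \<le> h y"
    using main[of y] hitp_le1[of "{z}" B n y] hz by (cases "y = z") auto
  define s where "s = (norm (lat y - lat z))^2"
  have "h y = (s + b) powr (-\<alpha>) / b powr (-\<alpha>)"
    unfolding h_def G0 unfolding Gam_def s_def b_def \<alpha>_def dr_def by simp
  also have "\<dots> = b powr \<alpha> * (s + b) powr (-\<alpha>)"
    by (simp only: powr_minus_divide) simp
  also have "\<dots> \<le> b powr \<alpha> * (1 + s) powr (-\<alpha>)"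
  proof (rule mult_left_mono)
    show "(s + b) powr (-\<alpha>) \<le> (1 + s) powr (-\<alpha>)"
      by (rule powr_mono2') (use al0 bp(1) zero_le_power2[of "norm (lat y - lat z)"] in \<open>auto simp: s_def add_pos_nonneg\<close>)
  qed simp
  finally show ?thesis using hy unfolding s_def b_def \<alpha>_def dr_def by simp
qed

lemma shell_lemma:
  fixes u t :: real
  assumes "u \<ge> 0" "t \<ge> 1" "u \<ge> t/2 - 1"
  shows "(1 + t^2)/17 \<le> 1 + u^2"
proof (cases "t \<ge> 4")
  case True
  then have "u \<ge> t/4" using assms by simp
  then have "u^2 \<ge> (t/4)^2" using assms True by (intro power_mono) auto
  then have "t^2/16 \<le> u^2" by (simp add: power_divide)
  moreover have "(1 + t^2)/17 = 1/17 + t^2/17" by (simp add: add_divide_distrib)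
  ultimately show ?thesis using zero_le_power2[of u] by linarith
next
  case False
  then have "t^2 \<le> 4^2" using assms by (intro power_mono) auto
  then have "t^2 \<le> 16" by simp
  moreover have "(1 + t^2)/17 = 1/17 + t^2/17" by (simp add: add_divide_distrib)
  ultimately show ?thesis using zero_le_power2[of u] by linarith
qed

lemma steps_norm: "e \<in> srw_steps \<Longrightarrow> norm (lat e) = 1"
  unfolding srw_steps_def by (auto simp: lat_axis_p lat_axis_m)

definition K1 :: "real \<Rightarrow> real" where
  "K1 dr = 4 * (17 * bconst dr) powr ((dr-2)/2) * (7 + bconst dr) powr (dr/2)"

lemma point_bound:
  fixes z :: "int^'n" and \<rho> :: real
  assumes d3: "CARD('n) \<ge> 3" and \<rho>0: "\<rho> > 0"
    and zr: "norm (lat z) \<le> \<rho>" and zt: "\<rho> + 1 - norm (lat z) \<le> 2 * norm (lat z)"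
  shows "hitp {z} (UNIV - {u. norm (lat u) < \<rho>}) n 0 \<le> K1 CARD('n) * (\<rho> + 1 - norm (lat z)) / (\<rho>+1)^(CARD('n) - 1)"
proof -
  define dr :: real where "dr = CARD('n)"
  have d3': "dr \<ge> 3" using d3 unfolding dr_def by simp
  define \<alpha> where "\<alpha> = (dr - 2)/2"
  define k where "k = dr/2"
  define b where "b = bconst dr"
  note bp = bconst_props[OF d3', folded b_def]
  have al0: "\<alpha> > 0" using d3' unfolding \<alpha>_def by simp
  have k0: "k > 0" using d3' unfolding k_def by simp
  have ka: "k = \<alpha> + 1" unfolding k_def \<alpha>_def by (simp add: field_simps)
  define B :: "(int^'n) set" where "B = UNIV - {u. norm (lat u) < \<rho>}"
  define Z where "Z = lat z"
  define t where "t = \<rho> + 1 - norm Z"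
  have t1: "t \<ge> 1" using zr unfolding t_def Z_def by simp
  have Zt: "t \<le> 2 * norm Z" using zt unfolding t_def Z_def by simp
  have Zp: "norm Z > 0" using t1 Zt by linarith
  define c where "c = (\<rho>+1)^2"
  define w where "w = ((\<rho>+2) / norm Z) *\<^sub>R Z"
  have nw: "norm w = \<rho> + 2" unfolding w_def using Zp \<rho>0 by simp
  have nzw: "norm (Z - w) = t + 1"
  proof -
    have "Z - w = (1 - (\<rho>+2)/norm Z) *\<^sub>R Z" unfolding w_def by (simp add: algebra_simps)
    then have "norm (Z - w) = \<bar>1 - (\<rho>+2)/norm Z\<bar> * norm Z" by simp
    also have "\<dots> = ((\<rho>+2)/norm Z - 1) * norm Z"
    proof -
      have "(\<rho>+2)/norm Z \<ge> 1" using Zp zr unfolding Z_def by (simp add: field_simps)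
      then show ?thesis by simp
    qed
    also have "\<dots> = t + 1" unfolding t_def using Zp by (simp add: field_simps)
    finally show ?thesis .
  qed
  define \<beta> where "\<beta> = 2 * (17*b) powr \<alpha> * (7+b) powr k * (1+t^2) / ((\<rho>+1) * t)"
  have \<beta>0: "\<beta> \<ge> 0" unfolding \<beta>_def using t1 \<rho>0 by simp
  define S :: "(int^'n) set" where "S = {y. norm (lat y - Z) < t/2}"
  define h where "h y = max (\<beta> * Pk CARD('n) c w (lat y)) 0" for y
  have main: "hitp {z} B n 0 \<le> h 0"
  proof (rule hitp_compare[of h "{z}" S B])
    show "0 \<le> h x" for x unfolding h_def by simp
    show "{z} \<subseteq> S" unfolding S_def Z_def using t1 by simp
    show "0 \<notin> S" unfolding S_def using Zt by simp
    show "(\<Sum>e\<in>srw_steps. h (x + e)) \<le> card (srw_steps :: (int^'n) set) * h x" if xS: "x \<notin> S" and xB: "x \<notin> B" for x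
    proof -
      have xr: "norm (lat x) < \<rho>" using xB unfolding B_def by simp
      define h' where "h' v = max (\<beta> * Pk CARD('n) c w v) 0" for v
      have nb: "h' v = \<beta> * Pk CARD('n) c w v" if "norm v \<le> norm (lat x) + 1" for v
      proof -
        have "norm v < \<rho> + 1" using that xr by simp
        then have "(norm v)^2 \<le> c" unfolding c_def by (intro power_mono) auto
        then have "Pk CARD('n) c w v \<ge> 0" unfolding Pk_def by simp
        then show ?thesis unfolding h'_def using \<beta>0 by simp
      qed
      have "(\<Sum>e\<in>srw_steps. h (x + e)) = (\<Sum>e\<in>srw_steps. h' (lat (x + e)))"
        unfolding h_def h'_def by simp
      also have "\<dots> = (\<Sum>i\<in>UNIV. h' (lat x + axis i 1) + h' (lat x - axis i 1))"
        by (rule steps_sum)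
      also have "\<dots> = (\<Sum>i\<in>UNIV. \<beta> * (Pk CARD('n) c w (lat x + axis i 1) + Pk CARD('n) c w (lat x - axis i 1)))"
      proof (rule sum.cong[OF refl])
        fix i :: 'n
        have "norm (lat x + axis i 1) \<le> norm (lat x) + 1" using norm_triangle_ineq[of "lat x" "axis i 1"] by simp
        moreover have "norm (lat x - axis i 1) \<le> norm (lat x) + 1" using norm_triangle_ineq4[of "lat x" "axis i 1"] by simp
        ultimately show "h' (lat x + axis i 1) + h' (lat x - axis i 1) = \<beta> * (Pk CARD('n) c w (lat x + axis i 1) + Pk CARD('n) c w (lat x - axis i 1))"
          using nb by (simp add: algebra_simps)
      qed
      also have "\<dots> = \<beta> * (\<Sum>i\<in>UNIV. Pk CARD('n) c w (lat x + axis i 1) + Pk CARD('n) c w (lat x - axis i 1))"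
        by (rule sum_distrib_left[symmetric])
      also have "\<dots> \<le> \<beta> * (2 * CARD('n) * Pk CARD('n) c w (lat x))"
      proof (rule mult_left_mono[OF P_super[OF d3] \<beta>0])
        show "(norm (lat x))^2 \<le> c" unfolding c_def using xr \<rho>0 by (intro power_mono) auto
        show "2 * norm (lat x) \<le> (norm w)^2 - c" unfolding nw c_def using xr by (simp add: power2_eq_square algebra_simps)
      qed
      also have "\<dots> \<le> 2 * CARD('n) * h x" unfolding h_def by (simp add: algebra_simps)
      also have "\<dots> = card (srw_steps :: (int^'n) set) * h x" unfolding card_steps by simp
      finally show ?thesis .
    qed
    show "hitp {z} B m (x + e) \<le> h (x + e)" if xS: "x \<notin> S" and xB: "x \<notin> B" and e: "e \<in> srw_steps" and ye: "x + e \<in> S" for x e m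
    proof -
      define Y where "Y = lat (x + e)"
      define u where "u = norm (Y - Z)"
      have uS: "u < t/2" using ye unfolding S_def u_def Y_def by simp
      have uge: "u \<ge> t/2 - 1"
      proof -
        have "norm (lat x - Z) \<ge> t/2" using xS unfolding S_def by simp
        moreover have "lat x - Z = (Y - Z) - lat e" unfolding Y_def lat_add by simp
        moreover have "norm ((Y - Z) - lat e) \<le> norm (Y - Z) + norm (lat e)" by (rule norm_triangle_ineq4)
        ultimately show ?thesis unfolding u_def using steps_norm[OF e] by simp
      qed
      have "hitp {z} B m (x + e) \<le> b powr \<alpha> * (1 + u^2) powr (-\<alpha>)"
        using stage2[OF d3, of z B m "x+e"] unfolding u_def Y_def Z_def b_def \<alpha>_def dr_def .
      also have "\<dots> \<le> b powr \<alpha> * ((1 + t^2)/17) powr (-\<alpha>)"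
        by (intro mult_left_mono powr_mono2') (use shell_lemma[OF _ t1 uge] al0 zero_le_power2[of t] in \<open>auto simp: u_def add_pos_nonneg\<close>)
      also have "\<dots> = (17*b) powr \<alpha> * (1 + t^2) powr (-\<alpha>)"
        using bp(1) by (simp add: powr_divide powr_minus_divide powr_mult divide_simps)
      also have "\<dots> \<le> \<beta> * Pk CARD('n) c w Y"
      proof -
        have Yn: "norm Y < \<rho> + 1 - t/2"
        proof -
          have "norm Y \<le> norm Z + norm (Y - Z)" using norm_triangle_ineq[of Z "Y - Z"] by simp
          then show ?thesis using uS t_def unfolding u_def by linarith
        qed
        have g: "c - (norm Y)^2 \<ge> (\<rho>+1) * (t/2)"
        proof -
          have "c - (norm Y)^2 = (\<rho>+1 - norm Y) * (\<rho>+1 + norm Y)" unfolding c_def by (simp add: power2_eq_square algebra_simps)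
          also have "\<dots> \<ge> (t/2) * (\<rho>+1)" using Yn t1 \<rho>0 by (intro mult_mono) auto
          finally show ?thesis by (simp add: mult.commute)
        qed
        have yw: "(norm (Y - w))^2 + b \<le> (7 + b) * (1 + t^2)"
        proof -
          have "norm (Y - w) \<le> norm (Y - Z) + norm (Z - w)" using norm_triangle_ineq[of "Y - Z" "Z - w"] by simp
          then have "norm (Y - w) \<le> 5/2 * t" using uS nzw t1 unfolding u_def by simp
          then have "(norm (Y - w))^2 \<le> (5/2 * t)^2" by (intro power_mono) auto
          moreover have "(5/2 * t)^2 = 25/4 * t^2" by (simp add: power2_eq_square)
          ultimately have "(norm (Y - w))^2 \<le> 7 + 7 * t^2" using zero_le_power2[of t] by linarith
          moreover have "b \<le> b * (1 + t^2)" using bp(1) by simp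
          ultimately show ?thesis by (simp add: algebra_simps)
        qed
        have pw: "((norm (Y - w))^2 + b) powr (-k) \<ge> ((7 + b) * (1 + t^2)) powr (-k)"
        proof (rule powr_mono2')
          show "0 < (norm (Y - w))^2 + b" using bp(1) by (intro add_nonneg_pos) auto
        qed (use yw k0 in auto)
        have "Pk CARD('n) c w Y = (c - (norm Y)^2) * ((norm (Y - w))^2 + b) powr (-k)"
          unfolding Pk_def b_def k_def dr_def by (rule refl)
        also have "\<dots> \<ge> ((\<rho>+1) * (t/2)) * (((7 + b) * (1 + t^2)) powr (-k))"
        proof (rule mult_mono[OF g pw])
          have "(\<rho>+1) * (t/2) > 0" using t1 \<rho>0 by (intro mult_pos_pos) auto
          then show "0 \<le> c - (norm Y)^2" using g by linarith
          show "0 \<le> ((7 + b) * (1 + t^2)) powr (-k)" by simp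
        qed
        finally have PL: "Pk CARD('n) c w Y \<ge> ((\<rho>+1) * (t/2)) * ((7 + b) powr (-k) * (1 + t^2) powr (-k))"
          using bp(1) by (simp add: powr_mult)
        have "\<beta> * (((\<rho>+1) * (t/2)) * ((7 + b) powr (-k) * (1 + t^2) powr (-k)))
            = (17*b) powr \<alpha> * ((7+b) powr k * (7 + b) powr (-k)) * ((1+t^2) * (1 + t^2) powr (-k))"
        proof -
          have nz: "(\<rho>+1) * t \<noteq> 0" using t1 \<rho>0 by simp
          have bt: "\<beta> * ((\<rho>+1) * (t/2)) = (17*b) powr \<alpha> * (7+b) powr k * (1+t^2)"
            unfolding \<beta>_def using nz by (simp add: field_simps)
          have "\<beta> * (((\<rho>+1) * (t/2)) * ((7 + b) powr (-k) * (1 + t^2) powr (-k)))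
             = (\<beta> * ((\<rho>+1) * (t/2))) * ((7 + b) powr (-k) * (1 + t^2) powr (-k))" by (simp only: mult.assoc)
          also have "\<dots> = (17*b) powr \<alpha> * ((7+b) powr k * (7 + b) powr (-k)) * ((1+t^2) * (1 + t^2) powr (-k))"
            unfolding bt by (simp only: mult_ac)
          finally show ?thesis .
        qed
        also have "\<dots> = (17*b) powr \<alpha> * (1 + t^2) powr (-\<alpha>)"
        proof -
          have "(7+b) powr k * (7 + b) powr (-k) = 1" using bp(1) by (simp add: powr_minus)
          moreover have "(1+t^2) * (1 + t^2) powr (-k) = (1 + t^2) powr (-\<alpha>)"
          proof -
            have "(1+t^2) * (1 + t^2) powr (-k) = (1+t^2) powr 1 * (1 + t^2) powr (-k)" by simp
            also have "\<dots> = (1 + t^2) powr (1 + (-k))" by (rule powr_add[symmetric])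
            finally show ?thesis using ka by simp
          qed
          ultimately show ?thesis by simp
        qed
        finally have "\<beta> * (((\<rho>+1) * (t/2)) * ((7 + b) powr (-k) * (1 + t^2) powr (-k))) = (17*b) powr \<alpha> * (1 + t^2) powr (-\<alpha>)" .
        moreover have "\<beta> * (((\<rho>+1) * (t/2)) * ((7 + b) powr (-k) * (1 + t^2) powr (-k))) \<le> \<beta> * Pk CARD('n) c w Y"
          using PL \<beta>0 by (rule mult_left_mono)
        ultimately show ?thesis by simp
      qed
      also have "\<dots> \<le> h (x + e)" unfolding h_def Y_def by simp
      finally show ?thesis .
    qed
  qed
  have "h 0 \<le> K1 CARD('n) * t / (\<rho>+1)^(CARD('n) - 1)"
  proof -
    define A where "A = \<rho> + 1"
    have A1: "A \<ge> 1" unfolding A_def using \<rho>0 by simp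
    have Ap: "A > 0" using A1 by simp
    define M where "M = (17*b) powr \<alpha> * (7+b) powr k"
    have M0: "M \<ge> 0" unfolding M_def by simp
    have P0: "Pk CARD('n) c w (lat 0) = A^2 * ((\<rho>+2)^2 + b) powr (-k)"
      unfolding Pk_def lat_zero c_def A_def b_def k_def dr_def using nw by simp
    have pw0: "((\<rho>+2)^2 + b) powr (-k) \<le> A powr (-dr)"
    proof -
      have "((\<rho>+2)^2 + b) powr (-k) \<le> (A^2) powr (-k)"
      proof (rule powr_mono2')
        have "(\<rho>+1)^2 \<le> (\<rho>+2)^2" by (rule power_mono) (use \<rho>0 in auto)
        then show "A^2 \<le> (\<rho>+2)^2 + b" unfolding A_def using bp(1) by linarith
      qed (use k0 Ap in auto)
      also have "(A^2) powr (-k) = A powr (-dr)"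
      proof -
        have "(A^2) powr (-k) = (A powr 2) powr (-k)" using Ap by (simp add: powr_numeral)
        also have "\<dots> = A powr (2 * (-k))" by (rule powr_powr)
        finally show ?thesis unfolding k_def by simp
      qed
      finally show ?thesis .
    qed
    have "\<beta> * Pk CARD('n) c w (lat 0) \<le> \<beta> * (A^2 * A powr (-dr))"
      unfolding P0 using pw0 \<beta>0 by (intro mult_left_mono) auto
    also have "\<beta> * (A^2 * A powr (-dr)) = 2 * M * ((1+t^2)/t) * (A * A powr (-dr))"
    proof -
      have bA: "\<beta> = 2*M*(1+t^2)/(A*t)" unfolding \<beta>_def M_def A_def by simp
      have tp: "t > 0" using t1 by simp
      show ?thesis unfolding bA using Ap tp by (simp add: field_simps power2_eq_square)
    qed
    also have "\<dots> \<le> 2 * M * (2*t) * (A * A powr (-dr))"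
    proof -
      have tp: "t > 0" using t1 by simp
      have "1 \<le> t*t" using t1 mult_mono[of 1 t 1 t] by simp
      then have "1 + t^2 \<le> (2*t)*t" by (simp add: power2_eq_square)
      then have "(1+t^2)/t \<le> 2*t" using tp by (simp add: pos_divide_le_eq)
      then show ?thesis using M0 Ap by (intro mult_right_mono mult_left_mono) auto
    qed
    also have "A * A powr (-dr) = 1 / A^(CARD('n) - 1)"
    proof -
      have "A * A powr (-dr) = A powr 1 * A powr (-dr)" using Ap by simp
      also have "\<dots> = A powr (1 + (-dr))" by (rule powr_add[symmetric])
      also have "1 + (-dr) = - real (CARD('n) - 1)" unfolding dr_def using d3 by (simp add: of_nat_diff)
      also have "A powr (- real (CARD('n) - 1)) = 1 / A powr (real (CARD('n) - 1))" by (rule powr_minus_divide)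
      also have "A powr (real (CARD('n) - 1)) = A^(CARD('n) - 1)" using Ap by (rule powr_realpow)
      finally show ?thesis .
    qed
    also have "2 * M * (2*t) * (1 / A^(CARD('n) - 1)) = K1 CARD('n) * t / (\<rho>+1)^(CARD('n) - 1)"
      unfolding K1_def M_def A_def b_def \<alpha>_def k_def dr_def by simp
    finally have "\<beta> * Pk CARD('n) c w (lat 0) \<le> K1 CARD('n) * t / (\<rho>+1)^(CARD('n) - 1)" .
    moreover have "K1 CARD('n) * t / (\<rho>+1)^(CARD('n) - 1) \<ge> 0"
      unfolding K1_def using t1 \<rho>0 by simp
    ultimately show ?thesis unfolding h_def by simp
  qed
  then show ?thesis using main unfolding B_def t_def Z_def by simp
qed

lemma box_card:
  fixes a :: "real^'n" and L :: real
  assumes L: "L \<ge> 0"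
  shows "finite {z::int^'n. \<forall>i. \<bar>real_of_int (z$i) - a$i\<bar> \<le> L}"
    "card {z::int^'n. \<forall>i. \<bar>real_of_int (z$i) - a$i\<bar> \<le> L} \<le> (2*L+1)^CARD('n)"
proof -
  define I where "I i = {\<lceil>a$i - L\<rceil> .. \<lfloor>a$i + L\<rfloor>}" for i
  have sub: "{z::int^'n. \<forall>i. \<bar>real_of_int (z$i) - a$i\<bar> \<le> L} \<subseteq> vec_lambda ` (PiE UNIV I)"
  proof
    fix z :: "int^'n" assume "z \<in> {z::int^'n. \<forall>i. \<bar>real_of_int (z$i) - a$i\<bar> \<le> L}"
    then have zi: "\<bar>real_of_int (z$i) - a$i\<bar> \<le> L" for i by simp
    have "(\<lambda>i. z$i) \<in> PiE UNIV I"
    proof (rule PiE_I)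
      fix i :: 'n
      have "a$i - L \<le> real_of_int (z$i)" "real_of_int (z$i) \<le> a$i + L" using zi[of i] by auto
      then show "z$i \<in> I i" unfolding I_def by (auto simp: ceiling_le_iff le_floor_iff)
    qed auto
    moreover have "z = vec_lambda (\<lambda>i. z$i)" by simp
    ultimately show "z \<in> vec_lambda ` (PiE UNIV I)" by blast
  qed
  have finPi: "finite (PiE UNIV I)" unfolding I_def by (intro finite_PiE) auto
  show "finite {z::int^'n. \<forall>i. \<bar>real_of_int (z$i) - a$i\<bar> \<le> L}"
    using sub finPi finite_subset by blast
  have "card {z::int^'n. \<forall>i. \<bar>real_of_int (z$i) - a$i\<bar> \<le> L} \<le> card (vec_lambda ` (PiE UNIV I))"
    using sub finPi by (intro card_mono) auto
  also have "\<dots> \<le> card (PiE UNIV I)" by (rule card_image_le[OF finPi])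
  also have "\<dots> = (\<Prod>i\<in>UNIV. card (I i))" by (rule card_PiE) simp
  finally have c1: "real (card {z::int^'n. \<forall>i. \<bar>real_of_int (z$i) - a$i\<bar> \<le> L}) \<le> (\<Prod>i\<in>UNIV. real (card (I i)))"
    by (simp add: of_nat_prod[symmetric] del: of_nat_prod)
  also have "\<dots> \<le> (\<Prod>i\<in>(UNIV::'n set). 2*L+1)"
  proof (rule prod_mono)
    fix i :: 'n
    have "real (card (I i)) = real (nat (\<lfloor>a$i + L\<rfloor> - \<lceil>a$i - L\<rceil> + 1))" unfolding I_def by simp
    also have "\<dots> \<le> 2*L+1"
    proof (cases "\<lfloor>a$i + L\<rfloor> - \<lceil>a$i - L\<rceil> + 1 \<ge> 0")
      case True
      then have "real (nat (\<lfloor>a$i + L\<rfloor> - \<lceil>a$i - L\<rceil> + 1)) = real_of_int (\<lfloor>a$i + L\<rfloor>) - real_of_int (\<lceil>a$i - L\<rceil>) + 1"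
        by simp
      moreover have "real_of_int (\<lfloor>a$i + L\<rfloor>) \<le> a$i + L" by (rule of_int_floor_le)
      moreover have "a$i - L \<le> real_of_int (\<lceil>a$i - L\<rceil>)" by (rule le_of_int_ceiling)
      ultimately show ?thesis by linarith
    next
      case False then show ?thesis using L by simp
    qed
    finally show "0 \<le> real (card (I i)) \<and> real (card (I i)) \<le> 2*L+1" by simp
  qed
  finally show "card {z::int^'n. \<forall>i. \<bar>real_of_int (z$i) - a$i\<bar> \<le> L} \<le> (2*L+1)^CARD('n)" by simp
qed

lemma lat_nth: "lat z $ i = real_of_int (z $ i)"
  unfolding lat_def by simp

lemma count_cell:
  fixes T :: "(real^'n) set" and R D cp :: real
  assumes R1: "R \<ge> 1" and D0: "0 \<le> D" and DR: "D \<le> R" and cp0: "cp > 0"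
   and Tdiam: "\<forall>x\<in>T. \<forall>y\<in>T. dist x y \<le> cp / R"
  shows "finite {z::int^'n. R \<le> norm (lat z) \<and> norm (lat z) \<le> R + D \<and> (1 / norm (lat z)) *\<^sub>R lat z \<in> T}
    \<and> real (card {z::int^'n. R \<le> norm (lat z) \<and> norm (lat z) \<le> R + D \<and> (1 / norm (lat z)) *\<^sub>R lat z \<in> T}) \<le> (D+2) * (4*cp+3)^CARD('n)"
proof -
  define V where "V = {z::int^'n. R \<le> norm (lat z) \<and> norm (lat z) \<le> R + D \<and> (1 / norm (lat z)) *\<^sub>R lat z \<in> T}"
  have pos: "(D+2) * (4*cp+3)^CARD('n) \<ge> 0" using D0 cp0 by simp
  show ?thesis
  proof (cases "V = {}")
    case True
    have E: "{z::int^'n. R \<le> norm (lat z) \<and> norm (lat z) \<le> R + D \<and> (1 / norm (lat z)) *\<^sub>R lat z \<in> T} = {}"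
      using True unfolding V_def .
    show ?thesis unfolding E using pos by simp
  next
    case False
    then obtain z0 where z0: "z0 \<in> V" by blast
    define u where "u = (1 / norm (lat z0)) *\<^sub>R lat z0"
    have uT: "u \<in> T" using z0 unfolding V_def u_def by simp
    have "R \<le> norm (lat z0)" using z0 unfolding V_def by simp
    then have nz0: "norm (lat z0) > 0" using R1 by linarith
    have nu: "norm u = 1" unfolding u_def using nz0 by simp
    define L where "L = 2*cp + 1"
    define M where "M = {\<lfloor>R\<rfloor> .. \<lfloor>R+D\<rfloor>}"
    define Box where "Box m = {z::int^'n. \<forall>i. \<bar>real_of_int (z$i) - (real_of_int m *\<^sub>R u)$i\<bar> \<le> L}" for m :: int
    have L0: "L \<ge> 0" unfolding L_def using cp0 by simp
    have sub: "V \<subseteq> (\<Union>m\<in>M. Box m)"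
    proof
      fix z assume zV: "z \<in> V"
      define nz where "nz = norm (lat z)"
      have nzR: "R \<le> nz" "nz \<le> R + D" using zV unfolding V_def nz_def by auto
      have nzp: "nz > 0" using nzR R1 by simp
      define zh where "zh = (1 / nz) *\<^sub>R lat z"
      have zhT: "zh \<in> T" using zV unfolding V_def zh_def nz_def by simp
      define m where "m = \<lfloor>nz\<rfloor>"
      have mM: "m \<in> M" unfolding M_def m_def using nzR by (auto intro: floor_mono)
      have dm: "0 \<le> nz - real_of_int m" "nz - real_of_int m \<le> 1" unfolding m_def by linarith+
      have "norm (lat z - real_of_int m *\<^sub>R u) \<le> norm (lat z - nz *\<^sub>R u) + norm ((nz - real_of_int m) *\<^sub>R u)"
      proof -
        have "lat z - real_of_int m *\<^sub>R u = (lat z - nz *\<^sub>R u) + (nz - real_of_int m) *\<^sub>R u" by (simp add: algebra_simps)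
        then show ?thesis by (metis norm_triangle_ineq)
      qed
      also have "norm (lat z - nz *\<^sub>R u) = nz * dist zh u"
      proof -
        have "lat z = nz *\<^sub>R zh" unfolding zh_def using nzp by simp
        then have "lat z - nz *\<^sub>R u = nz *\<^sub>R (zh - u)" by (simp add: algebra_simps)
        then show ?thesis using nzp by (simp add: dist_norm)
      qed
      also have "norm ((nz - real_of_int m) *\<^sub>R u) = nz - real_of_int m" using nu dm by simp
      finally have n1: "norm (lat z - real_of_int m *\<^sub>R u) \<le> nz * dist zh u + (nz - real_of_int m)" .
      have "nz * dist zh u \<le> (2*R) * (cp / R)"
        using Tdiam zhT uT nzR DR nzp by (intro mult_mono) auto
      also have "\<dots> = 2*cp" using R1 by simp
      finally have "norm (lat z - real_of_int m *\<^sub>R u) \<le> L" using n1 dm unfolding L_def by linarith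
      then have "\<bar>real_of_int (z$i) - (real_of_int m *\<^sub>R u)$i\<bar> \<le> L" for i
        using component_le_norm_cart[of "lat z - real_of_int m *\<^sub>R u" i] by (simp add: lat_nth)
      then have "z \<in> Box m" unfolding Box_def by simp
      then show "z \<in> (\<Union>m\<in>M. Box m)" using mM by blast
    qed
    have finM: "finite M" unfolding M_def by simp
    have finB: "finite (Box m)" for m unfolding Box_def by (rule box_card(1)[OF L0])
    have cB: "real (card (Box m)) \<le> (4*cp+3)^CARD('n)" for m
    proof -
      have e: "2 * L + 1 = 4*cp+3" unfolding L_def by simp
      have "real (card (Box m)) \<le> (2 * L + 1)^CARD('n)"
        using box_card(2)[OF L0, of "real_of_int m *\<^sub>R u"] unfolding Box_def .
      then show ?thesis unfolding e .
    qed
    have finU: "finite (\<Union>m\<in>M. Box m)" using finM finB by simp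
    have finV: "finite V" using sub finU finite_subset by blast
    have "card V \<le> card (\<Union>m\<in>M. Box m)" using sub finU by (rule card_mono[rotated])
    also have "\<dots> \<le> (\<Sum>m\<in>M. card (Box m))" by (rule card_UN_le[OF finM])
    finally have "real (card V) \<le> (\<Sum>m\<in>M. real (card (Box m)))" by (simp add: of_nat_sum[symmetric] del: of_nat_sum)
    also have "\<dots> \<le> (\<Sum>m\<in>M. (4*cp+3)^CARD('n))" by (rule sum_mono) (rule cB)
    also have "\<dots> = real (card M) * (4*cp+3)^CARD('n)" by simp
    also have "\<dots> \<le> (D+2) * (4*cp+3)^CARD('n)"
    proof (rule mult_right_mono)
      have "real (card M) = real (nat (\<lfloor>R+D\<rfloor> - \<lfloor>R\<rfloor> + 1))" unfolding M_def by simp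
      also have "\<dots> = real_of_int (\<lfloor>R+D\<rfloor>) - real_of_int (\<lfloor>R\<rfloor>) + 1"
      proof -
        have "\<lfloor>R\<rfloor> \<le> \<lfloor>R+D\<rfloor>" using D0 by (intro floor_mono) simp
        then show ?thesis by simp
      qed
      also have "\<dots> \<le> D + 2"
        using of_int_floor_le[of "R+D"] real_of_int_floor_gt_diff_one[of R] by linarith
      finally show "real (card M) \<le> D + 2" .
    qed (use cp0 in simp)
    finally show ?thesis using finV unfolding V_def by simp
  qed
qed

lemma K1_nonneg: "K1 d \<ge> 0"
  unfolding K1_def by simp

theorem lemma3p7:
  assumes "CARD('n::finite) \<ge> 3"
  shows "\<exists>R1::real. \<forall>\<delta>::real. \<forall>cp::real. \<delta> > 1 \<longrightarrow> cp > 1 \<longrightarrow>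
    (\<exists>C'::real. \<forall>R::real. \<forall>T::(real^'n) set.
       R > 1 \<longrightarrow> R > R1 \<longrightarrow> closed T \<longrightarrow> T \<subseteq> sphere 0 1 \<longrightarrow>
       (\<forall>x\<in>T. \<forall>y\<in>T. dist x y \<le> cp / R) \<longrightarrow>
       srw_hit_before
         {z::int^'n. R \<le> norm (lat z) \<and> norm (lat z) \<le> R + \<delta> * sqrt (ln R)
                     \<and> (1 / norm (lat z)) *\<^sub>R lat z \<in> T}
         (UNIV - {z::int^'n. norm (lat z) < R + \<delta> * sqrt (ln R)})
       \<le> C' * ln R / R ^ (CARD('n) - 1))"
proof (rule exI[of _ 3], intro allI impI)
  fix \<delta> cp :: real assume \<delta>1: "\<delta> > 1" and cp1: "cp > 1"
  note d3 = assms
  define d where "d = CARD('n)"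
  define C1 where "C1 = K1 (real d) * (4*cp+3)^d * (\<delta>+2)^2"
  define C2 where "C2 = \<delta>^(2*(d-1))"
  have C1p: "C1 \<ge> 0" unfolding C1_def using K1_nonneg cp1 by simp
  have C2p: "C2 \<ge> 0" unfolding C2_def using \<delta>1 by simp
  show "\<exists>C'. \<forall>R T. R > 1 \<longrightarrow> R > 3 \<longrightarrow> closed T \<longrightarrow> T \<subseteq> sphere 0 1 \<longrightarrow>
       (\<forall>x\<in>T. \<forall>y\<in>T. dist x y \<le> cp / R) \<longrightarrow>
       srw_hit_before
         {z::int^'n. R \<le> norm (lat z) \<and> norm (lat z) \<le> R + \<delta> * sqrt (ln R)
                     \<and> (1 / norm (lat z)) *\<^sub>R lat z \<in> T}
         (UNIV - {z::int^'n. norm (lat z) < R + \<delta> * sqrt (ln R)})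
       \<le> C' * ln R / R ^ (CARD('n) - 1)"
  proof (rule exI[of _ "C1 + C2"], intro allI impI)
    fix R :: real and T :: "(real^'n) set"
    assume R1: "R > 1" and R3: "R > 3" and clT: "closed T" and Ts: "T \<subseteq> sphere 0 1"
      and Tdiam: "\<forall>x\<in>T. \<forall>y\<in>T. dist x y \<le> cp / R"
    define D where "D = \<delta> * sqrt (ln R)"
    define \<rho> where "\<rho> = R + D"
    define V where "V = {z::int^'n. R \<le> norm (lat z) \<and> norm (lat z) \<le> R + \<delta> * sqrt (ln R) \<and> (1 / norm (lat z)) *\<^sub>R lat z \<in> T}"
    define B where "B = (UNIV - {z::int^'n. norm (lat z) < R + \<delta> * sqrt (ln R)})"
    have lnR: "ln R \<ge> 1"
    proof -
      have "exp 1 \<le> R" using exp_le R3 by linarith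
      then show ?thesis using R3 by (simp add: ln_ge_iff)
    qed
    have D0: "D \<ge> 0" unfolding D_def using \<delta>1 lnR by simp
    have Rp: "R^(d-1) > 0" using R1 by simp
    have tail: "C1 * ln R / R^(d-1) \<le> (C1 + C2) * ln R / R^(d-1)"
      using C2p lnR Rp by (intro divide_right_mono mult_right_mono) auto
    have tail2: "C2 * ln R / R^(d-1) \<le> (C1 + C2) * ln R / R^(d-1)"
      using C1p lnR Rp by (intro divide_right_mono mult_right_mono) auto
    have main: "srw_hit_before V B \<le> (C1 + C2) * ln R / R ^ (CARD('n) - 1)"
    proof (cases "D \<le> R")
      case False
      have "srw_hit_before V B \<le> 1"
        unfolding srw_hit_before_def using prob_space.prob_le_1[OF prob_space_srw] by simp
      also have "1 \<le> C2 * ln R / R^(d-1)"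
      proof -
        have "R < \<delta> * sqrt R"
        proof -
          have "ln R \<le> R" using ln_le_minus_one[of R] R1 by simp
          then have "sqrt (ln R) \<le> sqrt R" by simp
          then have "D \<le> \<delta> * sqrt R" unfolding D_def using \<delta>1 by (intro mult_left_mono) auto
          then show ?thesis using False by simp
        qed
        moreover have "sqrt R * sqrt R = R" using R1 by simp
        ultimately have "sqrt R * sqrt R < \<delta> * sqrt R" by simp
        then have "sqrt R < \<delta>" by (rule mult_right_less_imp_less) (use R1 in simp)
        then have "(sqrt R)^2 < \<delta>^2" using R1 by (intro power_strict_mono) auto
        then have "R < \<delta>^2" using R1 by simp
        then have "R^(d-1) \<le> (\<delta>^2)^(d-1)" using R1 by (intro power_mono) auto
        also have "\<dots> = C2" unfolding C2_def by (simp add: power_mult)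
        finally have "R^(d-1) \<le> C2" .
        then have "1 \<le> C2 / R^(d-1)" using Rp by simp
        also have "\<dots> \<le> C2 / R^(d-1) * ln R"
        proof -
          have x0: "C2 / R^(d-1) \<ge> 0" using C2p Rp by simp
          then have "C2 / R^(d-1) * 1 \<le> C2 / R^(d-1) * ln R" using lnR by (intro mult_left_mono) auto
          then show ?thesis by simp
        qed
        finally show ?thesis by simp
      qed
      also have "\<dots> \<le> (C1 + C2) * ln R / R^(d-1)" by (rule tail2)
      finally show ?thesis unfolding d_def .
    next
      case True
      have Bdef: "B = UNIV - {u. norm (lat u) < \<rho>}" unfolding B_def \<rho>_def D_def ..
      note cc = count_cell[OF order_less_imp_le[OF R1] D0 True order_less_trans[OF zero_less_one cp1] Tdiam]
      have finV: "finite V" using cc unfolding V_def D_def by simp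
      have cardV: "real (card V) \<le> (D+2) * (4*cp+3)^d" using cc unfolding V_def D_def d_def by simp
      have \<rho>0: "\<rho> > 0" unfolding \<rho>_def using R1 D0 by simp
      have pt: "hitp {z} B N 0 \<le> K1 (real d) * (D+1) / R^(d-1)" if zV: "z \<in> V" for z N
      proof -
        have zR: "R \<le> norm (lat z)" "norm (lat z) \<le> \<rho>" using zV unfolding V_def \<rho>_def D_def by auto
        have zt: "\<rho> + 1 - norm (lat z) \<le> 2 * norm (lat z)" using zR True R1 unfolding \<rho>_def by simp
        have "hitp {z} B N 0 \<le> K1 CARD('n) * (\<rho> + 1 - norm (lat z)) / (\<rho>+1)^(CARD('n) - 1)"
          unfolding Bdef by (rule point_bound[OF d3 \<rho>0 zR(2) zt])
        also have "\<dots> \<le> K1 (real d) * (D+1) / R^(d-1)"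
        proof -
          have "\<rho> + 1 - norm (lat z) \<le> D + 1" using zR unfolding \<rho>_def by simp
          moreover have "\<rho> + 1 - norm (lat z) \<ge> 0" using zR by simp
          ultimately have num: "K1 (real d) * (\<rho> + 1 - norm (lat z)) \<le> K1 (real d) * (D+1)"
            using K1_nonneg by (intro mult_left_mono) auto
          have den: "R^(d-1) \<le> (\<rho>+1)^(d-1)" using R1 D0 unfolding \<rho>_def by (intro power_mono) auto
          have "K1 (real d) * (\<rho> + 1 - norm (lat z)) / (\<rho>+1)^(d-1) \<le> K1 (real d) * (D+1) / (\<rho>+1)^(d-1)"
            using num \<rho>0 by (intro divide_right_mono) auto
          also have "\<dots> \<le> K1 (real d) * (D+1) / R^(d-1)"
            using den Rp K1_nonneg D0 by (intro divide_left_mono) auto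
          finally show ?thesis unfolding d_def .
        qed
        finally show ?thesis .
      qed
      have "srw_hit_before V B \<le> C1 * ln R / R^(d-1)"
      proof (rule srw_hit_before_le)
        fix N
        have "hitp V B N 0 \<le> (\<Sum>z\<in>V. hitp {z} B N 0)" by (rule hitp_union[OF finV])
        also have "\<dots> \<le> (\<Sum>z\<in>V. K1 (real d) * (D+1) / R^(d-1))" by (rule sum_mono) (rule pt)
        also have "\<dots> = real (card V) * (K1 (real d) * (D+1) / R^(d-1))" by simp
        also have "\<dots> \<le> ((D+2) * (4*cp+3)^d) * (K1 (real d) * (D+1) / R^(d-1))"
          using cardV K1_nonneg D0 Rp by (intro mult_right_mono) auto
        also have "\<dots> = (((D+2) * (4*cp+3)^d) * (K1 (real d) * (D+1))) / R^(d-1)" by (rule times_divide_eq_right)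
        also have "\<dots> = K1 (real d) * (4*cp+3)^d * ((D+2) * (D+1)) / R^(d-1)" by (simp add: mult_ac)
        also have "\<dots> \<le> K1 (real d) * (4*cp+3)^d * ((\<delta>+2)^2 * ln R) / R^(d-1)"
        proof -
          define s where "s = sqrt (ln R)"
          have s1: "s \<ge> 1" unfolding s_def using lnR by simp
          have ss: "s^2 = ln R" unfolding s_def using lnR by simp
          have a: "D + 2 \<le> (\<delta>+2) * s" unfolding D_def s_def[symmetric] using s1 by (simp add: algebra_simps)
          have b: "D + 1 \<le> (\<delta>+2) * s" unfolding D_def s_def[symmetric] using s1 by (simp add: algebra_simps)
          have "(D+2) * (D+1) \<le> ((\<delta>+2) * s) * ((\<delta>+2) * s)" using a b D0 by (intro mult_mono) auto
          also have "\<dots> = (\<delta>+2)^2 * ln R" using ss by (simp add: power2_eq_square algebra_simps)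
          finally have "(D+2) * (D+1) \<le> (\<delta>+2)^2 * ln R" .
          then show ?thesis using K1_nonneg cp1 Rp by (intro divide_right_mono mult_left_mono) auto
        qed
        also have "\<dots> = C1 * ln R / R^(d-1)" unfolding C1_def by (simp add: mult_ac)
        finally show "hitp V B N 0 \<le> C1 * ln R / R^(d-1)" .
      qed
      also have "\<dots> \<le> (C1 + C2) * ln R / R^(d-1)" by (rule tail)
      finally show ?thesis unfolding d_def .
    qed
    show "srw_hit_before
         {z::int^'n. R \<le> norm (lat z) \<and> norm (lat z) \<le> R + \<delta> * sqrt (ln R)
                     \<and> (1 / norm (lat z)) *\<^sub>R lat z \<in> T}
         (UNIV - {z::int^'n. norm (lat z) < R + \<delta> * sqrt (ln R)})
       \<le> (C1 + C2) * ln R / R ^ (CARD('n) - 1)"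
      using main unfolding V_def B_def .
  qed
qed

end
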